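(* Let $m\ge1$ and let $Y^1,\dots,Y^m$ be independent copies of the photon-count process $Y=(Y_t)_{t=1}^T$ of an HTMM, and $Y^{(m)}_t=\sum_{k=1}^mY^k_t$. Assume $0<q_{00}<1$, $\theta_1>0$, that $p_{00},p_{10}$ have finite moment generating functions near $0$, and that $M=V\Lambda V^{-1}$ with $\Lambda=\mathrm{diag}(\lambda_0,\dots,\lambda_r)$, $\lambda_r=1$, column $r$ of $V$ equal to $e_r$. Define $\alpha_x,\alpha^0_x$ as below, and $$\mu_t=m\theta_1\sum_{x\in\mathcal S}\alpha_x\lambda_x^{t-1},\qquad \mu^0_t=m\theta_1\sum_{x\in\mathcal S}\alpha^0_x\lambda_x^{t-1}\quad(t\ge1).$$ Then $\mathbb E[Y^{(m)}_t]=\mu_t$ (and if $\nu_0<1$, $\mu_t=m\theta_1\sum_{x=0}^{r-1}(\nu_0\alpha^0_x+(1-\nu_0)\alpha^1_x)\lambda_x^{t-1}$), and the covariance $\Sigma_{tt'}=\mathrm{Cov}(Y^{(m)}_t,Y^{(m)}_{t'})$ is $$\Sigma_{tt}=\frac1m\big(m\theta_1(\theta_3+1)+m-\mu_t\big)\mu_t,$$ $$\Sigma_{tt'}=\frac1m\left[\Big(\theta_2-q_{00}\frac{1-\theta_2}{1-q_{00}}\Big)\mu^0_{t-t'}+\frac{1-\theta_2}{1-q_{00}}\mu^0_{t-t'+1}-\mu_t\right]\mu_{t'}\quad (1\le t'<t\le T).$$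
   Context: HTMM: fix $r\ge1$, $T\ge1$, $\mathcal S=\{0,\dots,r\}$; $q_{xz}\in[0,1]$ ($x\in\mathcal S$, $0\le z\le r-1$) with $\sum_xq_{xz}=1$; column-stochastic $M^\ell$ with column $0$ equal to $e_0$, column $r$ equal to $e_r$, $M^\ell_{xz}=q_{xz}$ for $1\le z\le r-1$; $M^s$ with column $0$ equal to $(q_{00},\dots,q_{r0})^{\mathrm T}$ and $M^s_{xz}=\delta_{xz}$ for $z\ge1$; $M=M^sM^\ell$. $p_{00},p_{10}$ are distributions on $\mathbb N_0$, $p_{x0}:=p_{10}$ for $x\ge1$, $p_{xx'}:=\delta_0$ for $x'\neq0$; $\nu$ a probability vector on $\mathcal S$. Joint law: $\mathbb P(X_0=x_0,X'_t=x'_t,X_t=x_t,Y_t=y_t,1\le t\le T)=\nu_{x_0}\prod_{t}M^\ell_{x'_tx_{t-1}}M^s_{x_tx'_t}p_{x_tx'_t}(y_t)$. Parameters: $\theta_1=\mathbb E[Y_t\mid X'_t=0]$, $\theta_2=q_{00}\mathbb E[Y_t\mid X'_t=X_t=0]/\theta_1$, $\theta_3=\mathrm{Var}[Y_t\mid X'_t=0]/\theta_1^2-1/\theta_1$. Coefficients: $\alpha_x=V_{0x}\frac{\lambda_x}{q_{00}}\sum_z(V^{-1})_{xz}\nu_z$, $\alpha^0_x=\frac{\lambda_x}{q_{00}}V_{0x}(V^{-1})_{x0}$, and for $\nu_0<1$, $\alpha^1_x=\frac{\lambda_x}{q_{00}}V_{0x}\sum_z(V^{-1})_{xz}\nu'_z$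 with $\nu'=\frac{1}{1-\nu_0}(0,\nu_1,\dots,\nu_r)$. Convention $0^0=1$. *)

theory Defs
  imports "HOL-Probability.Probability"
begin

text \<open>Hidden-state HTMM with states 0..r. Matrices are functions on indices in 0..r.\<close>

definition Mell :: "nat \<Rightarrow> (nat \<Rightarrow> nat \<Rightarrow> real) \<Rightarrow> nat \<Rightarrow> nat \<Rightarrow> real" where
  "Mell r q x z = (if z = 0 then (if x = 0 then 1 else 0)
                   else if z = r then (if x = r then 1 else 0)
                   else q x z)"

definition Ms :: "(nat \<Rightarrow> nat \<Rightarrow> real) \<Rightarrow> nat \<Rightarrow> nat \<Rightarrow> real" where
  "Ms q x z = (if z = 0 then q x 0 else (if x = z then 1 else 0))"

definition Mfull :: "nat \<Rightarrow> (nat \<Rightarrow> nat \<Rightarrow> real) \<Rightarrow> nat \<Rightarrow> nat \<Rightarrow> real" where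
  "Mfull r q x z = (\<Sum>y\<le>r. Ms q x y * Mell r q y z)"

definition emis :: "nat pmf \<Rightarrow> nat pmf \<Rightarrow> nat \<Rightarrow> nat \<Rightarrow> nat pmf" where
  "emis p00 p10 x x' = (if x' = 0 then (if x = 0 then p00 else p10) else return_pmf 0)"

text \<open>A sample path: (X_0, [X'_1..X'_T], [X_1..X_T], [Y_1..Y_T]).\<close>
type_synonym path = "nat \<times> nat list \<times> nat list \<times> nat list"

definition htmm_dens :: "nat \<Rightarrow> nat \<Rightarrow> (nat \<Rightarrow> nat \<Rightarrow> real) \<Rightarrow> (nat \<Rightarrow> real)
    \<Rightarrow> nat pmf \<Rightarrow> nat pmf \<Rightarrow> path \<Rightarrow> real" where
  "htmm_dens r T q \<nu> p00 p10 \<omega> =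
    (case \<omega> of (x0, xs', xs, ys) \<Rightarrow>
      (if length xs' = T \<and> length xs = T \<and> length ys = T \<and> x0 \<le> r
          \<and> set xs' \<subseteq> {..r} \<and> set xs \<subseteq> {..r}
       then \<nu> x0 * (\<Prod>t\<in>{1..T}.
              Mell r q (xs' ! (t - 1)) (if t = 1 then x0 else xs ! (t - 2))
              * Ms q (xs ! (t - 1)) (xs' ! (t - 1))
              * pmf (emis p00 p10 (xs ! (t - 1)) (xs' ! (t - 1))) (ys ! (t - 1)))
       else 0))"

definition htmm :: "nat \<Rightarrow> nat \<Rightarrow> (nat \<Rightarrow> nat \<Rightarrow> real) \<Rightarrow> (nat \<Rightarrow> real)
    \<Rightarrow> nat pmf \<Rightarrow> nat pmf \<Rightarrow> path pmf" where
  "htmm r T q \<nu> p00 p10 = embed_pmf (htmm_dens r T q \<nu> p00 p10)"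

text \<open>Photon count Y_t of a path (t \<ge> 1).\<close>
definition Yobs :: "nat \<Rightarrow> path \<Rightarrow> nat" where
  "Yobs t \<omega> = (case \<omega> of (x0, xs', xs, ys) \<Rightarrow> ys ! (t - 1))"

definition htmm_copies :: "nat \<Rightarrow> path pmf \<Rightarrow> (nat \<Rightarrow> path) pmf" where
  "htmm_copies m P = Pi_pmf {..<m} undefined (\<lambda>_. P)"

definition Ysum :: "nat \<Rightarrow> nat \<Rightarrow> (nat \<Rightarrow> path) \<Rightarrow> real" where
  "Ysum m t \<omega> = real (\<Sum>k<m. Yobs t (\<omega> k))"

definition pmf_cov :: "'a pmf \<Rightarrow> ('a \<Rightarrow> real) \<Rightarrow> ('a \<Rightarrow> real) \<Rightarrow> real" where
  "pmf_cov P X Z = measure_pmf.expectation P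
     (\<lambda>\<omega>. (X \<omega> - measure_pmf.expectation P X) * (Z \<omega> - measure_pmf.expectation P Z))"

text \<open>Parameters theta: conditional moments of Y_t given X'_t = 0, where under the
 model X_t | X'_t=0 has law (q_{x0})_x and Y_t | (X_t=x, X'_t=0) ~ p_{x0}.\<close>
definition mean_pmf :: "nat pmf \<Rightarrow> real" where
  "mean_pmf p = measure_pmf.expectation p real"

definition mom2_pmf :: "nat pmf \<Rightarrow> real" where
  "mom2_pmf p = measure_pmf.expectation p (\<lambda>n. (real n)^2)"

definition theta1 :: "(nat \<Rightarrow> nat \<Rightarrow> real) \<Rightarrow> nat pmf \<Rightarrow> nat pmf \<Rightarrow> real" where
  "theta1 q p00 p10 = q 0 0 * mean_pmf p00 + (1 - q 0 0) * mean_pmf p10"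

definition theta2 :: "(nat \<Rightarrow> nat \<Rightarrow> real) \<Rightarrow> nat pmf \<Rightarrow> nat pmf \<Rightarrow> real" where
  "theta2 q p00 p10 = q 0 0 * mean_pmf p00 / theta1 q p00 p10"

definition theta3 :: "(nat \<Rightarrow> nat \<Rightarrow> real) \<Rightarrow> nat pmf \<Rightarrow> nat pmf \<Rightarrow> real" where
  "theta3 q p00 p10 =
     (let th1 = theta1 q p00 p10;
          var = q 0 0 * mom2_pmf p00 + (1 - q 0 0) * mom2_pmf p10 - th1^2
      in var / th1^2 - 1 / th1)"

end

theory Submission
  imports Defs
begin


lemma embed_fin:
  fixes f :: "'a \<Rightarrow> real"
  assumes "\<And>x. 0 \<le> f x" "\<And>x. x \<notin> A \<Longrightarrow> f x = 0" "finite A" "sum f A = 1"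
  shows "pmf (embed_pmf f) x = f x"
proof (rule pmf_embed_pmf)
  show "0 \<le> f x" for x using assms by auto
  have "(\<integral>\<^sup>+x. ennreal (f x) \<partial>count_space UNIV) = (\<Sum>x\<in>A. ennreal (f x))"
    using assms by (intro nn_integral_count_space') auto
  also have "\<dots> = ennreal (sum f A)" using assms by (simp add: sum_ennreal)
  finally show "(\<integral>\<^sup>+x. ennreal (f x) \<partial>count_space UNIV) = 1" using assms by simp
qed

lemma pmf_bind_inj:
  assumes inj: "\<And>u v u' v'. g u v = g u' v' \<Longrightarrow> u = u' \<and> v = v'"
  shows "pmf (p \<bind> (\<lambda>u. map_pmf (g u) (f u))) (g u0 v0) = pmf p u0 * pmf (f u0) v0"
proof -
  have eq: "ennreal (pmf (map_pmf (g u) (f u)) (g u0 v0)) = ennreal (pmf (f u0) v0) * indicator {u0} u" for u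
  proof (cases "u = u0")
    case True
    have "inj (g u0)" using inj by (auto intro: injI)
    then show ?thesis using True by (simp add: pmf_map_inj')
  next
    case False
    then have "g u0 v0 \<notin> set_pmf (map_pmf (g u) (f u))" using inj by auto
    then show ?thesis using False by (simp add: pmf_eq_0_set_pmf)
  qed
  have "ennreal (pmf (p \<bind> (\<lambda>u. map_pmf (g u) (f u))) (g u0 v0))
      = (\<integral>\<^sup>+u. ennreal (pmf (f u0) v0) * indicator {u0} u \<partial>measure_pmf p)"
    unfolding ennreal_pmf_bind by (simp add: eq)
  also have "\<dots> = ennreal (pmf (f u0) v0) * ennreal (pmf p u0)"
    by (simp add: emeasure_pmf_single)
  finally have "ennreal (pmf (p \<bind> (\<lambda>u. map_pmf (g u) (f u))) (g u0 v0)) = ennreal (pmf p u0 * pmf (f u0) v0)"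
    by (simp add: ennreal_mult mult.commute)
  then show ?thesis by (simp add: ennreal_inj)
qed

lemma pmf_bind_notin:
  assumes "\<And>u v. w \<noteq> g u v"
  shows "pmf (bind_pmf p (\<lambda>u. map_pmf (g u) (f u))) w = 0"
  by (subst pmf_eq_0_set_pmf) (use assms in auto)

lemma sdL: "finite A \<Longrightarrow> x \<in> A \<Longrightarrow> (\<Sum>y\<in>A. (if y = x then c else 0) * f y) = (c::'b::comm_semiring_1) * f x"
proof -
  assume "finite A" "x \<in> A"
  have "(\<Sum>y\<in>A. (if y = x then c else 0) * f y) = (\<Sum>y\<in>A. if y = x then c * f x else 0)"
    by (rule sum.cong) auto
  then show ?thesis using \<open>finite A\<close> \<open>x \<in> A\<close> by (simp add: sum.delta')
qed

lemma sdR: "finite A \<Longrightarrow> x \<in> A \<Longrightarrow> (\<Sum>y\<in>A. f y * (if y = x then c else 0)) = f x * (c::'b::comm_semiring_1)"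
  using sdL[of A x c f] by (simp add: mult.commute)

locale hm =
  fixes r :: nat and q :: "nat \<Rightarrow> nat \<Rightarrow> real" and \<nu> :: "nat \<Rightarrow> real" and p00 p10 :: "nat pmf"
  assumes r_pos: "r \<ge> 1"
    and q_range: "\<And>x z. x \<le> r \<Longrightarrow> z \<le> r - 1 \<Longrightarrow> 0 \<le> q x z \<and> q x z \<le> 1"
    and q_stoch: "\<And>z. z \<le> r - 1 \<Longrightarrow> (\<Sum>x\<le>r. q x z) = 1"
    and \<nu>_nonneg: "\<And>x. x \<le> r \<Longrightarrow> 0 \<le> \<nu> x"
    and \<nu>_sum: "(\<Sum>x\<le>r. \<nu> x) = 1"
begin

definition "nupmf = embed_pmf (\<lambda>x. if x \<le> r then \<nu> x else 0)"
definition "colL z = embed_pmf (\<lambda>a. if a \<le> r then Mell r q a z else 0)"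
definition "colS a = embed_pmf (\<lambda>b. if b \<le> r then Ms q b a else 0)"
definition "trip z = colL z \<bind> (\<lambda>a. map_pmf (Pair a) (colS a \<bind> (\<lambda>b. map_pmf (Pair b) (emis p00 p10 b a))))"
definition ext :: "path \<Rightarrow> nat \<times> nat \<times> nat \<Rightarrow> path" where
  "ext \<omega> e = (case \<omega> of (x0,xs',xs,ys) \<Rightarrow> case e of (a,b,y) \<Rightarrow> (x0, xs'@[a], xs@[b], ys@[y]))"
definition ls :: "path \<Rightarrow> nat" where "ls \<omega> = (case \<omega> of (x0,xs',xs,ys) \<Rightarrow> last (x0#xs))"

primrec gen :: "nat \<Rightarrow> path pmf" where
  "gen 0 = map_pmf (\<lambda>x. (x,[],[],[])) nupmf"
| "gen (Suc n) = gen n \<bind> (\<lambda>\<omega>. map_pmf (ext \<omega>) (trip (ls \<omega>)))"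

lemma Mell_nonneg: "a \<le> r \<Longrightarrow> z \<le> r \<Longrightarrow> 0 \<le> Mell r q a z"
  using q_range[of a z] by (auto simp: Mell_def)

lemma Ms_nonneg: "b \<le> r \<Longrightarrow> 0 \<le> Ms q b a"
  using q_range[of b 0] by (auto simp: Ms_def)

lemma Mell_sum: "z \<le> r \<Longrightarrow> (\<Sum>a\<le>r. Mell r q a z) = 1"
proof -
  assume z: "z \<le> r"
  consider "z = 0" | "z = r" "z \<noteq> 0" | "z \<noteq> 0" "z \<noteq> r" by blast
  then show ?thesis
  proof cases
    case 3
    then have "z \<le> r - 1" using z by simp
    then show ?thesis using q_stoch[of z] 3 by (simp add: Mell_def)
  qed (auto simp: Mell_def)
qed

lemma Ms_sum: "a \<le> r \<Longrightarrow> (\<Sum>b\<le>r. Ms q b a) = 1"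
  using q_stoch[of 0] by (cases "a = 0") (auto simp: Ms_def)

lemma pmf_nupmf: "pmf nupmf x = (if x \<le> r then \<nu> x else 0)"
  unfolding nupmf_def
proof (rule embed_fin[where A="{..r}"])
  have "(\<Sum>x\<le>r. if x \<le> r then \<nu> x else 0) = (\<Sum>x\<le>r. \<nu> x)" by (rule sum.cong) auto
  then show "(\<Sum>x\<le>r. if x \<le> r then \<nu> x else 0) = 1" using \<nu>_sum by simp
qed (use \<nu>_nonneg in auto)

lemma pmf_colL: "z \<le> r \<Longrightarrow> pmf (colL z) a = (if a \<le> r then Mell r q a z else 0)"
  unfolding colL_def
proof (rule embed_fin[where A="{..r}"])
  assume z: "z \<le> r"
  have "(\<Sum>a\<le>r. if a \<le> r then Mell r q a z else 0) = (\<Sum>a\<le>r. Mell r q a z)" by (rule sum.cong) auto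
  then show "(\<Sum>a\<le>r. if a \<le> r then Mell r q a z else 0) = 1" using Mell_sum[OF z] by simp
qed (use Mell_nonneg in auto)

lemma pmf_colS: "a \<le> r \<Longrightarrow> pmf (colS a) b = (if b \<le> r then Ms q b a else 0)"
  unfolding colS_def
proof (rule embed_fin[where A="{..r}"])
  assume z: "a \<le> r"
  have "(\<Sum>b\<le>r. if b \<le> r then Ms q b a else 0) = (\<Sum>b\<le>r. Ms q b a)" by (rule sum.cong) auto
  then show "(\<Sum>b\<le>r. if b \<le> r then Ms q b a else 0) = 1" using Ms_sum[OF z] by simp
qed (use Ms_nonneg in auto)

lemma pmf_trip: "z \<le> r \<Longrightarrow> pmf (trip z) (a,b,y) =
   (if a \<le> r \<and> b \<le> r then Mell r q a z * Ms q b a * pmf (emis p00 p10 b a) y else 0)"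
  unfolding trip_def
  by (subst pmf_bind_inj, simp, subst pmf_bind_inj, simp) (auto simp: pmf_colL pmf_colS)

lemma ext_inj: "ext w e = ext w' e' \<Longrightarrow> w = w' \<and> e = e'"
  by (cases w; cases w'; cases e; cases e') (auto simp: ext_def)

lemma pmf_gen_Suc: "pmf (gen (Suc n)) (ext w e) = pmf (gen n) w * pmf (trip (ls w)) e"
  unfolding gen.simps by (rule pmf_bind_inj, rule ext_inj)


lemma dens_Suc: "htmm_dens r (Suc n) q \<nu> p00 p10 (ext w e) = htmm_dens r n q \<nu> p00 p10 w * pmf (trip (ls w)) e"
proof -
  obtain x0 l1 l2 l3 where w: "w = (x0,l1,l2,l3)" by (cases w) auto
  obtain a b y where e: "e = (a,b,y)" by (cases e) auto
  let ?C = "length l1 = n \<and> length l2 = n \<and> length l3 = n \<and> x0 \<le> r \<and> set l1 \<subseteq> {..r} \<and> set l2 \<subseteq> {..r}"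
  show ?thesis
  proof (cases ?C)
    case False
    then show ?thesis by (auto simp: w e ext_def htmm_dens_def)
  next
    case C: True
    define z where "z = last (x0#l2)"
    have z: "z \<le> r" using C unfolding z_def
      by (metis atMost_iff last_ConsL last_ConsR last_in_set subsetD)
    have lsw: "ls w = z" by (simp add: w ls_def z_def)
    have zn: "z = (if Suc n = 1 then x0 else l2 ! (n - 1))"
      using C by (auto simp: z_def last_conv_nth)
    define F where "F = (\<lambda>t. Mell r q (l1 ! (t - 1)) (if t = 1 then x0 else l2 ! (t - 2)) *
              Ms q (l2 ! (t - 1)) (l1 ! (t - 1)) *
              pmf (emis p00 p10 (l2 ! (t - 1)) (l1 ! (t - 1))) (l3 ! (t - 1)))"
    define F' where "F' = (\<lambda>t. Mell r q ((l1@[a]) ! (t - 1)) (if t = 1 then x0 else (l2@[b]) ! (t - 2)) *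
              Ms q ((l2@[b]) ! (t - 1)) ((l1@[a]) ! (t - 1)) *
              pmf (emis p00 p10 ((l2@[b]) ! (t - 1)) ((l1@[a]) ! (t - 1))) ((l3@[y]) ! (t - 1)))"
    have FF: "prod F' {Suc 0..n} = prod F {Suc 0..n}"
    proof (rule prod.cong)
      fix t assume "t \<in> {Suc 0..n}"
      then show "F' t = F t" using C unfolding F_def F'_def
        by (auto simp: nth_append)
    qed simp
    have Fl: "F' (Suc n) = Mell r q a z * Ms q b a * pmf (emis p00 p10 b a) y"
      unfolding F'_def zn using C by (auto simp: nth_append)
    have "htmm_dens r (Suc n) q \<nu> p00 p10 (ext w e) =
        (if a \<le> r \<and> b \<le> r then \<nu> x0 * prod F' {1..Suc n} else 0)"
      using C by (simp add: w e ext_def htmm_dens_def F'_def)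
    also have "\<dots> = (if a \<le> r \<and> b \<le> r then \<nu> x0 * prod F {1..n} * (Mell r q a z * Ms q b a * pmf (emis p00 p10 b a) y) else 0)"
      by (simp add: prod.cl_ivl_Suc FF Fl)
    also have "\<dots> = htmm_dens r n q \<nu> p00 p10 w * pmf (trip (ls w)) e"
    proof -
      have tr: "pmf (trip (ls w)) e = (if a \<le> r \<and> b \<le> r then Mell r q a z * Ms q b a * pmf (emis p00 p10 b a) y else 0)"
        by (simp add: lsw e pmf_trip[OF z])
      show ?thesis unfolding tr using C by (simp add: w htmm_dens_def F_def)
    qed
    finally show ?thesis .
  qed
qed

lemma pmf_gen: "pmf (gen n) w = htmm_dens r n q \<nu> p00 p10 w"
proof (induction n arbitrary: w)
  case 0
  obtain x0 l1 l2 l3 where w: "w = (x0,l1,l2,l3)" by (cases w) auto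
  show ?case
  proof (cases "l1 = [] \<and> l2 = [] \<and> l3 = []")
    case True
    have "inj (\<lambda>x::nat. (x, [] :: nat list, [] :: nat list, [] :: nat list))" by (auto intro: injI)
    from pmf_map_inj'[OF this, of nupmf x0]
    show ?thesis using True by (simp add: w pmf_nupmf htmm_dens_def)
  next
    case False
    then have "pmf (gen 0) w = 0" by (auto simp: w pmf_eq_0_set_pmf)
    then show ?thesis using False by (auto simp: w htmm_dens_def)
  qed
next
  case (Suc n)
  obtain x0 l1 l2 l3 where w: "w = (x0,l1,l2,l3)" by (cases w) auto
  show ?case
  proof (cases "l1 \<noteq> [] \<and> l2 \<noteq> [] \<and> l3 \<noteq> []")
    case True
    define w' where "w' = (x0, butlast l1, butlast l2, butlast l3)"
    define e' where "e' = (last l1, last l2, last l3)"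
    have weq: "w = ext w' e'"
      using True by (simp add: w w'_def e'_def ext_def)
    have "pmf (gen (Suc n)) w = pmf (gen n) w' * pmf (trip (ls w')) e'"
      unfolding weq by (rule pmf_gen_Suc)
    also have "\<dots> = htmm_dens r (Suc n) q \<nu> p00 p10 w"
      unfolding weq dens_Suc Suc.IH ..
    finally show ?thesis .
  next
    case False
    have "pmf (gen (Suc n)) w = 0" unfolding gen.simps
      by (rule pmf_bind_notin) (use False in \<open>auto simp: w ext_def split: prod.splits\<close>)
    then show ?thesis using False by (auto simp: w htmm_dens_def)
  qed
qed

lemma htmm_gen: "htmm r n q \<nu> p00 p10 = gen n"
proof (rule pmf_eqI)
  fix i
  have nn: "\<And>x. 0 \<le> htmm_dens r n q \<nu> p00 p10 x" using pmf_gen pmf_nonneg by metis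
  have "(\<integral>\<^sup>+x. ennreal (htmm_dens r n q \<nu> p00 p10 x) \<partial>count_space UNIV) = 1"
    by (simp add: pmf_gen[symmetric] nn_integral_pmf)
  then show "pmf (htmm r n q \<nu> p00 p10) i = pmf (gen n) i"
    unfolding htmm_def using nn by (simp add: pmf_embed_pmf pmf_gen)
qed


lemma gen_supp: "w \<in> set_pmf (gen n) \<Longrightarrow> length (snd (snd (snd w))) = n \<and> ls w \<le> r"
proof -
  assume "w \<in> set_pmf (gen n)"
  then have d: "htmm_dens r n q \<nu> p00 p10 w \<noteq> 0" by (simp add: set_pmf_iff pmf_gen)
  obtain x0 l1 l2 l3 where w: "w = (x0,l1,l2,l3)" by (cases w) auto
  have C: "length l3 = n \<and> x0 \<le> r \<and> set l2 \<subseteq> {..r}"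
    using d by (auto simp: w htmm_dens_def split: if_splits)
  then have "last (x0#l2) \<le> r"
    by (metis atMost_iff last_ConsL last_ConsR last_in_set subsetD)
  then show ?thesis using C by (simp add: w ls_def)
qed

lemma Yobs_ext: "w \<in> set_pmf (gen k) \<Longrightarrow> 1 \<le> i \<Longrightarrow> i \<le> k \<Longrightarrow> Yobs i (ext w e) = Yobs i w"
  using gen_supp[of w k]
  by (cases w; cases e) (auto simp: Yobs_def ext_def nth_append)

lemma Yobs_ext_last: "w \<in> set_pmf (gen k) \<Longrightarrow> Yobs (Suc k) (ext w (a,b,y)) = y"
  using gen_supp[of w k]
  by (cases w) (auto simp: Yobs_def ext_def nth_append)

lemma ls_ext: "ls (ext w (a,b,y)) = b"
  by (cases w) (auto simp: ls_def ext_def)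

lemma trip_int: "z \<le> r \<Longrightarrow> (\<integral>\<^sup>+e. H e \<partial>trip z) =
   (\<Sum>a\<le>r. \<Sum>b\<le>r. ennreal (Mell r q a z * Ms q b a) * (\<integral>\<^sup>+y. H (a,b,y) \<partial>emis p00 p10 b a))"
proof -
  assume z: "z \<le> r"
  have sL: "set_pmf (colL z) \<subseteq> {..r}" using z by (auto simp: set_pmf_iff pmf_colL split: if_splits)
  have "(\<integral>\<^sup>+e. H e \<partial>trip z) = (\<integral>\<^sup>+a. (\<integral>\<^sup>+b. (\<integral>\<^sup>+y. H (a,b,y) \<partial>emis p00 p10 b a) \<partial>colS a) \<partial>colL z)"
    by (simp add: trip_def)
  also have "\<dots> = (\<Sum>a\<le>r. (\<integral>\<^sup>+b. (\<integral>\<^sup>+y. H (a,b,y) \<partial>emis p00 p10 b a) \<partial>colS a) * ennreal (pmf (colL z) a))"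
    by (rule nn_integral_measure_pmf_support) (use sL in auto)
  also have "\<dots> = (\<Sum>a\<le>r. (\<Sum>b\<le>r. (\<integral>\<^sup>+y. H (a,b,y) \<partial>emis p00 p10 b a) * ennreal (pmf (colS a) b)) * ennreal (pmf (colL z) a))"
  proof (rule sum.cong[OF refl])
    fix a assume a: "a \<in> {..r}"
    have sS: "set_pmf (colS a) \<subseteq> {..r}" using a by (auto simp: set_pmf_iff pmf_colS split: if_splits)
    show "(\<integral>\<^sup>+b. (\<integral>\<^sup>+y. H (a,b,y) \<partial>emis p00 p10 b a) \<partial>colS a) * ennreal (pmf (colL z) a) =
      (\<Sum>b\<le>r. (\<integral>\<^sup>+y. H (a,b,y) \<partial>emis p00 p10 b a) * ennreal (pmf (colS a) b)) * ennreal (pmf (colL z) a)"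
      by (subst nn_integral_measure_pmf_support[where A="{..r}"]) (use sS in auto)
  qed
  also have "\<dots> = (\<Sum>a\<le>r. \<Sum>b\<le>r. ennreal (Mell r q a z * Ms q b a) * (\<integral>\<^sup>+y. H (a,b,y) \<partial>emis p00 p10 b a))"
    using z by (auto intro!: sum.cong simp: sum_distrib_right sum_distrib_left pmf_colL pmf_colS ennreal_mult Mell_nonneg Ms_nonneg mult_ac)
  finally show ?thesis .
qed

lemma Mfull_nonneg: "x \<le> r \<Longrightarrow> z \<le> r \<Longrightarrow> 0 \<le> Mfull r q x z"
  unfolding Mfull_def by (auto intro!: sum_nonneg mult_nonneg_nonneg Ms_nonneg Mell_nonneg)

lemma Mfull_colsum: "z \<le> r \<Longrightarrow> (\<Sum>x\<le>r. Mfull r q x z) = 1"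
proof -
  assume z: "z \<le> r"
  have "(\<Sum>x\<le>r. Mfull r q x z) = (\<Sum>y\<le>r. \<Sum>x\<le>r. Ms q x y * Mell r q y z)"
    unfolding Mfull_def by (rule sum.swap)
  also have "\<dots> = (\<Sum>y\<le>r. (\<Sum>x\<le>r. Ms q x y) * Mell r q y z)"
    by (simp add: sum_distrib_right)
  also have "\<dots> = (\<Sum>y\<le>r. Mell r q y z)" by (simp add: Ms_sum)
  finally show ?thesis using Mell_sum[OF z] by simp
qed

definition Mt :: "(nat \<Rightarrow> real) \<Rightarrow> nat \<Rightarrow> real" where
  "Mt h z = (\<Sum>b\<le>r. Mfull r q b z * h b)"

lemma Mt_nonneg: "(\<And>b. b \<le> r \<Longrightarrow> 0 \<le> h b) \<Longrightarrow> z \<le> r \<Longrightarrow> 0 \<le> Mt h z"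
  unfolding Mt_def by (auto intro!: sum_nonneg mult_nonneg_nonneg Mfull_nonneg)

lemma trip_h: "z \<le> r \<Longrightarrow> (\<And>b. b \<le> r \<Longrightarrow> 0 \<le> h b) \<Longrightarrow>
   (\<integral>\<^sup>+e. ennreal (h (fst (snd e))) \<partial>trip z) = ennreal (Mt h z)"
proof -
  assume z: "z \<le> r" and h: "\<And>b. b \<le> r \<Longrightarrow> 0 \<le> h b"
  have "(\<integral>\<^sup>+e. ennreal (h (fst (snd e))) \<partial>trip z) =
     (\<Sum>a\<le>r. \<Sum>b\<le>r. ennreal (Mell r q a z * Ms q b a * h b))"
    using z h by (simp add: trip_int measure_pmf.emeasure_space_1 ennreal_mult Mell_nonneg Ms_nonneg mult.assoc)
  also have "\<dots> = (\<Sum>a\<le>r. ennreal (\<Sum>b\<le>r. Mell r q a z * Ms q b a * h b))"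
    using z h by (intro sum.cong refl sum_ennreal) (auto intro!: mult_nonneg_nonneg Mell_nonneg Ms_nonneg)
  also have "\<dots> = ennreal (\<Sum>a\<le>r. \<Sum>b\<le>r. Mell r q a z * Ms q b a * h b)"
    using z h by (intro sum_ennreal sum_nonneg) (auto intro!: mult_nonneg_nonneg Mell_nonneg Ms_nonneg)
  also have "(\<Sum>a\<le>r. \<Sum>b\<le>r. Mell r q a z * Ms q b a * h b) = (\<Sum>b\<le>r. \<Sum>a\<le>r. Mell r q a z * Ms q b a * h b)"
    by (rule sum.swap)
  also have "\<dots> = Mt h z"
    unfolding Mt_def Mfull_def
    by (simp add: sum_distrib_left mult_ac)
  finally show ?thesis .
qed


lemma ls_ext': "ls (ext w e) = fst (snd e)"
  by (cases e) (simp add: ls_ext)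

lemma step_inv:
  assumes g: "\<And>w e. w \<in> set_pmf (gen n) \<Longrightarrow> g (ext w e) = g w"
    and h: "\<And>b. b \<le> r \<Longrightarrow> 0 \<le> h b"
  shows "(\<integral>\<^sup>+w. g w * ennreal (h (ls w)) \<partial>gen (Suc n)) = (\<integral>\<^sup>+w. g w * ennreal (Mt h (ls w)) \<partial>gen n)"
proof -
  have "(\<integral>\<^sup>+w. g w * ennreal (h (ls w)) \<partial>gen (Suc n)) =
      (\<integral>\<^sup>+w. (\<integral>\<^sup>+e. g (ext w e) * ennreal (h (ls (ext w e))) \<partial>trip (ls w)) \<partial>gen n)"
    by simp
  also have "\<dots> = (\<integral>\<^sup>+w. g w * (\<integral>\<^sup>+e. ennreal (h (fst (snd e))) \<partial>trip (ls w)) \<partial>gen n)"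
  proof (rule nn_integral_cong_AE, rule AE_pmfI)
    fix w assume w: "w \<in> set_pmf (gen n)"
    show "(\<integral>\<^sup>+e. g (ext w e) * ennreal (h (ls (ext w e))) \<partial>trip (ls w)) =
        g w * (\<integral>\<^sup>+e. ennreal (h (fst (snd e))) \<partial>trip (ls w))"
      by (simp add: g[OF w] ls_ext' nn_integral_cmult)
  qed
  also have "\<dots> = (\<integral>\<^sup>+w. g w * ennreal (Mt h (ls w)) \<partial>gen n)"
  proof (rule nn_integral_cong_AE, rule AE_pmfI)
    fix w assume w: "w \<in> set_pmf (gen n)"
    show "g w * (\<integral>\<^sup>+e. ennreal (h (fst (snd e))) \<partial>trip (ls w)) = g w * ennreal (Mt h (ls w))"
      using gen_supp[OF w] h by (simp add: trip_h)
  qed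
  finally show ?thesis .
qed

lemma law: "(\<And>b. b \<le> r \<Longrightarrow> 0 \<le> h b) \<Longrightarrow>
  (\<integral>\<^sup>+w. ennreal (h (ls w)) \<partial>gen n) = ennreal (\<Sum>z\<le>r. (((Mt ^^ n) h) z) * \<nu> z)"
proof (induction n arbitrary: h)
  case 0
  have sN: "set_pmf nupmf \<subseteq> {..r}" by (auto simp: set_pmf_iff pmf_nupmf split: if_splits)
  have "(\<integral>\<^sup>+w. ennreal (h (ls w)) \<partial>gen 0) = (\<integral>\<^sup>+x. ennreal (h x) \<partial>nupmf)"
    by (simp add: ls_def)
  also have "\<dots> = (\<Sum>x\<le>r. ennreal (h x) * ennreal (pmf nupmf x))"
    by (rule nn_integral_measure_pmf_support) (use sN in auto)
  also have "\<dots> = (\<Sum>x\<le>r. ennreal (h x * \<nu> x))"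
    using 0 \<nu>_nonneg by (intro sum.cong refl) (simp add: pmf_nupmf ennreal_mult)
  also have "\<dots> = ennreal (\<Sum>x\<le>r. h x * \<nu> x)"
    using 0 \<nu>_nonneg by (intro sum_ennreal) auto
  finally show ?case by simp
next
  case (Suc n)
  have "(\<integral>\<^sup>+w. ennreal (h (ls w)) \<partial>gen (Suc n)) = (\<integral>\<^sup>+w. 1 * ennreal (h (ls w)) \<partial>gen (Suc n))" by simp
  also have "\<dots> = (\<integral>\<^sup>+w. 1 * ennreal (Mt h (ls w)) \<partial>gen n)"
    by (rule step_inv) (use Suc.prems in auto)
  also have "\<dots> = ennreal (\<Sum>z\<le>r. (((Mt ^^ n) (Mt h)) z) * \<nu> z)"
    using Suc.IH[of "Mt h"] Suc.prems Mt_nonneg by simp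
  also have "\<dots> = ennreal (\<Sum>z\<le>r. (((Mt ^^ Suc n) h) z) * \<nu> z)"
    by (simp only: funpow_Suc_right comp_def)
  finally show ?case .
qed

lemma funpow_Mt_nonneg: "(\<And>b. b \<le> r \<Longrightarrow> 0 \<le> h b) \<Longrightarrow> z \<le> r \<Longrightarrow> 0 \<le> (Mt ^^ k) h z"
  by (induction k arbitrary: z) (auto intro!: Mt_nonneg)

lemma iter_inv:
  assumes g: "\<And>k w e. k \<ge> n \<Longrightarrow> w \<in> set_pmf (gen k) \<Longrightarrow> g (ext w e) = g w"
  shows "(\<And>b. b \<le> r \<Longrightarrow> 0 \<le> h b) \<Longrightarrow>
    (\<integral>\<^sup>+w. g w * ennreal (h (ls w)) \<partial>gen (n + k)) = (\<integral>\<^sup>+w. g w * ennreal ((Mt ^^ k) h (ls w)) \<partial>gen n)"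
proof (induction k arbitrary: h)
  case 0 then show ?case by simp
next
  case (Suc k)
  have "(\<integral>\<^sup>+w. g w * ennreal (h (ls w)) \<partial>gen (n + Suc k)) = (\<integral>\<^sup>+w. g w * ennreal (Mt h (ls w)) \<partial>gen (n + k))"
    unfolding add_Suc_right
  proof (rule step_inv)
    fix w e assume "w \<in> set_pmf (gen (n + k))"
    then show "g (ext w e) = g w" using g[of "n+k" w e] by simp
  qed (rule Suc.prems)
  also have "\<dots> = (\<integral>\<^sup>+w. g w * ennreal ((Mt ^^ k) (Mt h) (ls w)) \<partial>gen n)"
    by (rule Suc.IH) (use Suc.prems Mt_nonneg in auto)
  also have "\<dots> = (\<integral>\<^sup>+w. g w * ennreal ((Mt ^^ Suc k) h (ls w)) \<partial>gen n)"
    by (simp only: funpow_Suc_right comp_def)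
  finally show ?case .
qed


lemma trip_emis:
  assumes z: "z \<le> r" and h: "\<And>b. b \<le> r \<Longrightarrow> 0 \<le> h b"
    and \<Phi>0: "\<Phi> 0 = 0"
    and c0: "(\<integral>\<^sup>+y. ennreal (\<Phi> y) \<partial>p00) = ennreal c0" and c1: "(\<integral>\<^sup>+y. ennreal (\<Phi> y) \<partial>p10) = ennreal c1"
    and c0nn: "0 \<le> c0" and c1nn: "0 \<le> c1"
  shows "(\<integral>\<^sup>+e. ennreal (\<Phi> (snd (snd e))) * ennreal (h (fst (snd e))) \<partial>trip z) =
     ennreal (Mell r q 0 z * (\<Sum>b\<le>r. q b 0 * (if b = 0 then c0 else c1) * h b))"
proof -
  define cc where "cc b = (if b = 0 then c0 else c1)" for b :: nat
  have ccnn: "0 \<le> cc b" for b using c0nn c1nn by (simp add: cc_def)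
  have inner: "(\<integral>\<^sup>+y. ennreal (\<Phi> y) * ennreal (h b) \<partial>emis p00 p10 b a) = ennreal (if a = 0 then cc b * h b else 0)"
    if b: "b \<le> r" for a b
  proof (cases "a = 0")
    case True
    have "(\<integral>\<^sup>+y. ennreal (\<Phi> y) * ennreal (h b) \<partial>emis p00 p10 b a) = (\<integral>\<^sup>+y. ennreal (\<Phi> y) \<partial>emis p00 p10 b 0) * ennreal (h b)"
      using True by (simp add: nn_integral_multc)
    also have "(\<integral>\<^sup>+y. ennreal (\<Phi> y) \<partial>emis p00 p10 b 0) = ennreal (cc b)"
      using c0 c1 by (simp add: emis_def cc_def)
    finally show ?thesis using True ccnn h[OF b] by (simp add: ennreal_mult)
  next
    case False
    then show ?thesis by (simp add: emis_def \<Phi>0)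
  qed
  have "(\<integral>\<^sup>+e. ennreal (\<Phi> (snd (snd e))) * ennreal (h (fst (snd e))) \<partial>trip z) =
     (\<Sum>a\<le>r. \<Sum>b\<le>r. ennreal (Mell r q a z * Ms q b a) * ennreal (if a = 0 then cc b * h b else 0))"
    using z by (simp add: trip_int inner)
  also have "\<dots> = (\<Sum>a\<le>r. \<Sum>b\<le>r. ennreal (Mell r q a z * Ms q b a * (if a = 0 then cc b * h b else 0)))"
    using z h ccnn by (intro sum.cong refl) (auto simp: ennreal_mult[symmetric] Mell_nonneg Ms_nonneg)
  also have "\<dots> = (\<Sum>a\<le>r. ennreal (\<Sum>b\<le>r. Mell r q a z * Ms q b a * (if a = 0 then cc b * h b else 0)))"
    using z h ccnn by (intro sum.cong refl sum_ennreal) (auto intro!: mult_nonneg_nonneg Mell_nonneg Ms_nonneg)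
  also have "\<dots> = ennreal (\<Sum>a\<le>r. \<Sum>b\<le>r. Mell r q a z * Ms q b a * (if a = 0 then cc b * h b else 0))"
    using z h ccnn by (intro sum_ennreal sum_nonneg) (auto intro!: mult_nonneg_nonneg Mell_nonneg Ms_nonneg)
  also have "(\<Sum>a\<le>r. \<Sum>b\<le>r. Mell r q a z * Ms q b a * (if a = 0 then cc b * h b else 0))
      = (\<Sum>a\<le>r. if a = 0 then (\<Sum>b\<le>r. Mell r q 0 z * Ms q b 0 * (cc b * h b)) else 0)"
    by (intro sum.cong refl) auto
  also have "\<dots> = (\<Sum>b\<le>r. Mell r q 0 z * Ms q b 0 * (cc b * h b))"
    by (simp add: sum.delta)
  also have "\<dots> = Mell r q 0 z * (\<Sum>b\<le>r. q b 0 * cc b * h b)"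
    by (simp add: sum_distrib_left Ms_def mult_ac)
  finally show ?thesis by (simp add: cc_def)
qed

lemma emis_step:
  assumes g: "\<And>w e. w \<in> set_pmf (gen n) \<Longrightarrow> g (ext w e) = g w"
    and h: "\<And>b. b \<le> r \<Longrightarrow> 0 \<le> h b"
    and \<Phi>0: "\<Phi> 0 = 0"
    and c0: "(\<integral>\<^sup>+y. ennreal (\<Phi> y) \<partial>p00) = ennreal c0" and c1: "(\<integral>\<^sup>+y. ennreal (\<Phi> y) \<partial>p10) = ennreal c1"
    and c0nn: "0 \<le> c0" and c1nn: "0 \<le> c1"
  shows "(\<integral>\<^sup>+w. g w * ennreal (\<Phi> (Yobs (Suc n) w)) * ennreal (h (ls w)) \<partial>gen (Suc n)) =
    (\<integral>\<^sup>+w. g w * ennreal (Mell r q 0 (ls w) * (\<Sum>b\<le>r. q b 0 * (if b = 0 then c0 else c1) * h b)) \<partial>gen n)"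
proof -
  have "(\<integral>\<^sup>+w. g w * ennreal (\<Phi> (Yobs (Suc n) w)) * ennreal (h (ls w)) \<partial>gen (Suc n)) =
      (\<integral>\<^sup>+w. (\<integral>\<^sup>+e. g (ext w e) * ennreal (\<Phi> (Yobs (Suc n) (ext w e))) * ennreal (h (ls (ext w e))) \<partial>trip (ls w)) \<partial>gen n)"
    by simp
  also have "\<dots> = (\<integral>\<^sup>+w. g w * (\<integral>\<^sup>+e. ennreal (\<Phi> (snd (snd e))) * ennreal (h (fst (snd e))) \<partial>trip (ls w)) \<partial>gen n)"
  proof (rule nn_integral_cong_AE, rule AE_pmfI)
    fix w assume w: "w \<in> set_pmf (gen n)"
    have "(\<integral>\<^sup>+e. g (ext w e) * ennreal (\<Phi> (Yobs (Suc n) (ext w e))) * ennreal (h (ls (ext w e))) \<partial>trip (ls w))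
       = (\<integral>\<^sup>+e. g w * (ennreal (\<Phi> (snd (snd e))) * ennreal (h (fst (snd e)))) \<partial>trip (ls w))"
    proof (rule nn_integral_cong)
      fix e :: "nat \<times> nat \<times> nat"
      obtain a b y where e: "e = (a,b,y)" by (cases e) auto
      show "g (ext w e) * ennreal (\<Phi> (Yobs (Suc n) (ext w e))) * ennreal (h (ls (ext w e))) =
          g w * (ennreal (\<Phi> (snd (snd e))) * ennreal (h (fst (snd e))))"
        using w by (simp add: e g Yobs_ext_last ls_ext mult.assoc)
    qed
    then show "(\<integral>\<^sup>+e. g (ext w e) * ennreal (\<Phi> (Yobs (Suc n) (ext w e))) * ennreal (h (ls (ext w e))) \<partial>trip (ls w)) =
        g w * (\<integral>\<^sup>+e. ennreal (\<Phi> (snd (snd e))) * ennreal (h (fst (snd e))) \<partial>trip (ls w))"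
      by (simp add: nn_integral_cmult)
  qed
  also have "\<dots> = (\<integral>\<^sup>+w. g w * ennreal (Mell r q 0 (ls w) * (\<Sum>b\<le>r. q b 0 * (if b = 0 then c0 else c1) * h b)) \<partial>gen n)"
  proof (rule nn_integral_cong_AE, rule AE_pmfI)
    fix w assume w: "w \<in> set_pmf (gen n)"
    show "g w * (\<integral>\<^sup>+e. ennreal (\<Phi> (snd (snd e))) * ennreal (h (fst (snd e))) \<partial>trip (ls w)) =
        g w * ennreal (Mell r q 0 (ls w) * (\<Sum>b\<le>r. q b 0 * (if b = 0 then c0 else c1) * h b))"
    proof -
      have "ls w \<le> r" using gen_supp[OF w] by simp
      from trip_emis[where z="ls w" and h=h and \<Phi>=\<Phi>, OF this h \<Phi>0 c0 c1 c0nn c1nn] show ?thesis by simp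
    qed
  qed
  finally show ?thesis .
qed


lemma Mt_one: "z \<le> r \<Longrightarrow> (Mt ^^ k) (\<lambda>_. 1) z = 1"
proof (induction k arbitrary: z)
  case (Suc k)
  have "(Mt ^^ Suc k) (\<lambda>_. 1) z = (\<Sum>b\<le>r. Mfull r q b z * (Mt ^^ k) (\<lambda>_. 1) b)" by (simp add: Mt_def)
  also have "\<dots> = (\<Sum>b\<le>r. Mfull r q b z)" using Suc.IH by simp
  finally show ?case using Mfull_colsum Suc.prems by simp
qed simp

lemma Mt_cmult: "(Mt ^^ k) (\<lambda>z. f z * c) z = (Mt ^^ k) f z * c"
proof (induction k arbitrary: z)
  case (Suc k) then show ?case by (simp add: Mt_def sum_distrib_left sum_distrib_right mult_ac)
qed simp

lemma reduce:
  assumes g: "\<And>k w e. k \<ge> n \<Longrightarrow> w \<in> set_pmf (gen k) \<Longrightarrow> g (ext w e) = g w"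
    and T: "n \<le> T"
  shows "(\<integral>\<^sup>+w. g w \<partial>gen T) = (\<integral>\<^sup>+w. g w \<partial>gen n)"
proof -
  obtain k where k: "T = n + k" using T le_Suc_ex by blast
  have "(\<integral>\<^sup>+w. g w \<partial>gen T) = (\<integral>\<^sup>+w. g w * ennreal ((\<lambda>_. 1) (ls w)) \<partial>gen (n + k))" by (simp add: k)
  also have "\<dots> = (\<integral>\<^sup>+w. g w * ennreal ((Mt ^^ k) (\<lambda>_. 1) (ls w)) \<partial>gen n)"
    by (rule iter_inv[OF g]) auto
  also have "\<dots> = (\<integral>\<^sup>+w. g w \<partial>gen n)"
    by (rule nn_integral_cong_AE, rule AE_pmfI) (use gen_supp Mt_one in auto)
  finally show ?thesis .
qed

primrec Mp :: "nat \<Rightarrow> nat \<Rightarrow> nat \<Rightarrow> real" where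
  "Mp 0 x z = (if x = z then 1 else 0)"
| "Mp (Suc n) x z = (\<Sum>y\<le>r. Mp n x y * Mfull r q y z)"

lemma Mp_left: "x \<le> r \<Longrightarrow> z \<le> r \<Longrightarrow> Mp (Suc n) x z = (\<Sum>y\<le>r. Mfull r q x y * Mp n y z)"
proof (induction n arbitrary: z)
  case 0
  have "(\<Sum>y\<le>r. (if y = x then 1 else 0) * Mfull r q y z) = 1 * Mfull r q x z"
    using 0 by (intro sdL) auto
  moreover have "(\<Sum>y\<le>r. Mfull r q x y * (if y = z then 1 else 0)) = Mfull r q x z * 1"
    using 0 by (intro sdR) auto
  ultimately show ?case by (simp add: eq_commute[of x])
next
  case (Suc n)
  have "Mp (Suc (Suc n)) x z = (\<Sum>y\<le>r. (\<Sum>w\<le>r. Mfull r q x w * Mp n w y) * Mfull r q y z)"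
    using Suc by simp
  also have "\<dots> = (\<Sum>y\<le>r. \<Sum>w\<le>r. Mfull r q x w * Mp n w y * Mfull r q y z)"
    by (simp add: sum_distrib_right)
  also have "\<dots> = (\<Sum>w\<le>r. \<Sum>y\<le>r. Mfull r q x w * Mp n w y * Mfull r q y z)"
    by (rule sum.swap)
  also have "\<dots> = (\<Sum>w\<le>r. Mfull r q x w * Mp (Suc n) w z)"
    by (simp add: sum_distrib_left mult_ac)
  finally show ?case .
qed

lemma Mt_Mp: "z \<le> r \<Longrightarrow> (Mt ^^ k) f z = (\<Sum>x\<le>r. f x * Mp k x z)"
proof (induction k arbitrary: z)
  case 0
  have "(\<Sum>x\<le>r. f x * (if x = z then 1 else 0)) = f z * 1"
    using 0 by (intro sdR) auto
  then show ?case by simp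
next
  case (Suc k)
  have "(Mt ^^ Suc k) f z = (\<Sum>b\<le>r. Mfull r q b z * (Mt ^^ k) f b)"
    by (simp add: Mt_def[of "(Mt ^^ k) f"])
  also have "\<dots> = (\<Sum>b\<le>r. Mfull r q b z * (\<Sum>x\<le>r. f x * Mp k x b))"
    by (intro sum.cong refl) (simp add: Suc.IH)
  also have "\<dots> = (\<Sum>b\<le>r. \<Sum>x\<le>r. Mfull r q b z * (f x * Mp k x b))"
    by (simp add: sum_distrib_left)
  also have "\<dots> = (\<Sum>x\<le>r. \<Sum>b\<le>r. Mfull r q b z * (f x * Mp k x b))"
    by (rule sum.swap)
  also have "\<dots> = (\<Sum>x\<le>r. f x * Mp (Suc k) x z)"
    by (simp add: sum_distrib_left mult_ac)
  finally show ?case .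
qed

lemma Mfull_row0: "Mfull r q 0 z = q 0 0 * Mell r q 0 z"
proof -
  have "Mfull r q 0 z = (\<Sum>y\<le>r. (if y = 0 then q 0 0 else 0) * Mell r q y z)"
    unfolding Mfull_def Ms_def by (intro sum.cong refl) auto
  also have "\<dots> = q 0 0 * Mell r q 0 z" by (intro sdL) auto
  finally show ?thesis .
qed

lemma Mfull_col0: "y \<le> r \<Longrightarrow> Mfull r q y 0 = q y 0"
proof -
  assume y: "y \<le> r"
  have "Mfull r q y 0 = (\<Sum>w\<le>r. Ms q y w * (if w = 0 then 1 else 0))"
    unfolding Mfull_def Mell_def by (intro sum.cong refl) auto
  also have "\<dots> = Ms q y 0 * 1" by (intro sdR) auto
  finally show ?thesis by (simp add: Ms_def)
qed

lemma Mp_eig: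
  fixes V Vi :: "nat \<Rightarrow> nat \<Rightarrow> complex" and lam :: "nat \<Rightarrow> complex"
  assumes V_inv1: "\<And>x z. x \<le> r \<Longrightarrow> z \<le> r \<Longrightarrow> (\<Sum>y\<le>r. V x y * Vi y z) = (if x = z then 1 else 0)"
    and V_inv2: "\<And>x z. x \<le> r \<Longrightarrow> z \<le> r \<Longrightarrow> (\<Sum>y\<le>r. Vi x y * V y z) = (if x = z then 1 else 0)"
    and M_diag: "\<And>x z. x \<le> r \<Longrightarrow> z \<le> r \<Longrightarrow> complex_of_real (Mfull r q x z) = (\<Sum>y\<le>r. V x y * lam y * Vi y z)"
  shows "x \<le> r \<Longrightarrow> z \<le> r \<Longrightarrow> complex_of_real (Mp n x z) = (\<Sum>y\<le>r. V x y * lam y ^ n * Vi y z)"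
proof (induction n arbitrary: z)
  case 0
  then show ?case using V_inv1 by simp
next
  case (Suc n)
  have "complex_of_real (Mp (Suc n) x z) = (\<Sum>y\<le>r. (\<Sum>u\<le>r. V x u * lam u ^ n * Vi u y) * (\<Sum>w\<le>r. V y w * lam w * Vi w z))"
    using Suc by (simp add: M_diag)
  also have "\<dots> = (\<Sum>y\<le>r. \<Sum>u\<le>r. \<Sum>w\<le>r. (V x u * lam u ^ n * Vi u y) * (V y w * lam w * Vi w z))"
    by (simp only: sum_product)
  also have "\<dots> = (\<Sum>u\<le>r. \<Sum>y\<le>r. \<Sum>w\<le>r. (V x u * lam u ^ n * Vi u y) * (V y w * lam w * Vi w z))"
    by (rule sum.swap)
  also have "\<dots> = (\<Sum>u\<le>r. \<Sum>w\<le>r. \<Sum>y\<le>r. (V x u * lam u ^ n * Vi u y) * (V y w * lam w * Vi w z))"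
    by (rule sum.cong[OF refl], rule sum.swap)
  also have "\<dots> = (\<Sum>u\<le>r. \<Sum>w\<le>r. (V x u * lam u ^ n) * (\<Sum>y\<le>r. Vi u y * V y w) * (lam w * Vi w z))"
    by (simp add: sum_distrib_left sum_distrib_right mult_ac)
  also have "\<dots> = (\<Sum>u\<le>r. \<Sum>w\<le>r. (V x u * lam u ^ n) * (if u = w then 1 else 0) * (lam w * Vi w z))"
    by (intro sum.cong refl) (simp add: V_inv2)
  also have "\<dots> = (\<Sum>u\<le>r. V x u * lam u ^ Suc n * Vi u z)"
  proof (intro sum.cong refl)
    fix u assume u: "u \<in> {..r}"
    have "(\<Sum>w\<le>r. (V x u * lam u ^ n) * (if u = w then 1 else 0) * (lam w * Vi w z)) =
       (\<Sum>w\<le>r. (if w = u then 1 else 0) * ((V x u * lam u ^ n) * (lam w * Vi w z)))"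
      by (intro sum.cong refl) auto
    also have "\<dots> = 1 * ((V x u * lam u ^ n) * (lam u * Vi u z))" using u by (intro sdL) auto
    finally show "(\<Sum>w\<le>r. (V x u * lam u ^ n) * (if u = w then 1 else 0) * (lam w * Vi w z)) = V x u * lam u ^ Suc n * Vi u z"
      by (simp add: mult_ac)
  qed
  finally show ?case .
qed

end

locale hm2 = hm +
  fixes m00 m10 s00 s10 :: real
  assumes m00: "(\<integral>\<^sup>+y. ennreal (real y) \<partial>p00) = ennreal m00"
    and m10: "(\<integral>\<^sup>+y. ennreal (real y) \<partial>p10) = ennreal m10"
    and s00: "(\<integral>\<^sup>+y. ennreal ((real y)^2) \<partial>p00) = ennreal s00"
    and s10: "(\<integral>\<^sup>+y. ennreal ((real y)^2) \<partial>p10) = ennreal s10"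
    and mnn: "0 \<le> m00" "0 \<le> m10" "0 \<le> s00" "0 \<le> s10"
begin

definition "th = (\<Sum>b\<le>r. q b 0 * (if b = 0 then m00 else m10))"
definition "sq = (\<Sum>b\<le>r. q b 0 * (if b = 0 then s00 else s10))"
definition "PP s = (\<Sum>z\<le>r. (Mt ^^ s) (Mell r q 0) z * \<nu> z)"

lemma Yinv: "1 \<le> t \<Longrightarrow> t \<le> k \<Longrightarrow> w \<in> set_pmf (gen k) \<Longrightarrow> ennreal (real (Yobs t (ext w e))) = ennreal (real (Yobs t w))"
  using Yobs_ext by simp

lemma E1: assumes "t = Suc s" "t \<le> T"
  shows "(\<integral>\<^sup>+w. ennreal (real (Yobs t w)) \<partial>gen T) = ennreal (PP s * th)"
proof -
  have "(\<integral>\<^sup>+w. ennreal (real (Yobs t w)) \<partial>gen T) = (\<integral>\<^sup>+w. ennreal (real (Yobs t w)) \<partial>gen (Suc s))"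
    using assms by (intro reduce Yinv) auto
  also have "\<dots> = (\<integral>\<^sup>+w. 1 * ennreal (real (Yobs (Suc s) w)) * ennreal ((\<lambda>_. 1) (ls w)) \<partial>gen (Suc s))"
    using assms by simp
  also have "\<dots> = (\<integral>\<^sup>+w. 1 * ennreal (Mell r q 0 (ls w) * (\<Sum>b\<le>r. q b 0 * (if b = 0 then m00 else m10) * 1)) \<partial>gen s)"
    by (rule emis_step[OF _ _ _ m00 m10]) (use mnn in auto)
  also have "\<dots> = (\<integral>\<^sup>+w. ennreal ((\<lambda>z. Mell r q 0 z * th) (ls w)) \<partial>gen s)"
    by (simp add: th_def)
  also have "\<dots> = ennreal (\<Sum>z\<le>r. (Mt ^^ s) (\<lambda>z. Mell r q 0 z * th) z * \<nu> z)"
    by (rule law) (auto intro!: mult_nonneg_nonneg Mell_nonneg simp: th_def intro!: sum_nonneg q_range[THEN conjunct1] mnn)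
  also have "\<dots> = ennreal (PP s * th)"
    by (simp only: Mt_cmult) (simp add: PP_def sum_distrib_left mult_ac)
  finally show ?thesis .
qed


lemma E2: assumes "t = Suc s" "t \<le> T"
  shows "(\<integral>\<^sup>+w. ennreal ((real (Yobs t w))^2) \<partial>gen T) = ennreal (PP s * sq)"
proof -
  have "(\<integral>\<^sup>+w. ennreal ((real (Yobs t w))^2) \<partial>gen T) = (\<integral>\<^sup>+w. ennreal ((real (Yobs t w))^2) \<partial>gen (Suc s))"
    using assms by (intro reduce) (auto simp: Yobs_ext)
  also have "\<dots> = (\<integral>\<^sup>+w. 1 * ennreal ((\<lambda>y. (real y)^2) (Yobs (Suc s) w)) * ennreal ((\<lambda>_. 1) (ls w)) \<partial>gen (Suc s))"
    using assms by simp
  also have "\<dots> = (\<integral>\<^sup>+w. 1 * ennreal (Mell r q 0 (ls w) * (\<Sum>b\<le>r. q b 0 * (if b = 0 then s00 else s10) * 1)) \<partial>gen s)"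
    by (rule emis_step[OF _ _ _ s00 s10]) (use mnn in auto)
  also have "\<dots> = (\<integral>\<^sup>+w. ennreal ((\<lambda>z. Mell r q 0 z * sq) (ls w)) \<partial>gen s)"
    by (simp add: sq_def)
  also have "\<dots> = ennreal (\<Sum>z\<le>r. (Mt ^^ s) (\<lambda>z. Mell r q 0 z * sq) z * \<nu> z)"
    by (rule law) (auto intro!: mult_nonneg_nonneg Mell_nonneg simp: sq_def intro!: sum_nonneg q_range[THEN conjunct1] mnn)
  also have "\<dots> = ennreal (PP s * sq)"
    by (simp only: Mt_cmult) (simp add: PP_def sum_distrib_left mult_ac)
  finally show ?thesis .
qed

lemma th_nn: "0 \<le> th"
  unfolding th_def by (auto intro!: sum_nonneg mult_nonneg_nonneg q_range[THEN conjunct1] mnn)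

lemma E12: assumes "t = Suc s" "t' = Suc s'" "t' < t" "t \<le> T"
  shows "(\<integral>\<^sup>+w. ennreal (real (Yobs t w) * real (Yobs t' w)) \<partial>gen T) =
    ennreal (PP s' * (\<Sum>b\<le>r. q b 0 * (if b = 0 then m00 else m10) * (Mt ^^ (s - t')) (\<lambda>z. Mell r q 0 z * th) b))"
proof -
  define k where "k = s - t'"
  have sk: "s = t' + k" using assms k_def by simp
  define hh where "hh = (\<lambda>z. Mell r q 0 z * th)"
  have hhnn: "\<And>b. b \<le> r \<Longrightarrow> 0 \<le> hh b" unfolding hh_def using th_nn
    by (auto intro!: mult_nonneg_nonneg Mell_nonneg)
  define C where "C = (\<Sum>b\<le>r. q b 0 * (if b = 0 then m00 else m10) * (Mt ^^ k) hh b)"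
  have Cnn: "0 \<le> C" unfolding C_def
    using funpow_Mt_nonneg[OF hhnn] by (auto intro!: sum_nonneg mult_nonneg_nonneg q_range[THEN conjunct1] mnn)
  have "(\<integral>\<^sup>+w. ennreal (real (Yobs t w) * real (Yobs t' w)) \<partial>gen T) =
      (\<integral>\<^sup>+w. ennreal (real (Yobs t w) * real (Yobs t' w)) \<partial>gen (Suc s))"
    using assms by (intro reduce) (auto simp: Yobs_ext)
  also have "\<dots> = (\<integral>\<^sup>+w. ennreal (real (Yobs t' w)) * ennreal (real (Yobs (Suc s) w)) * ennreal ((\<lambda>_. 1) (ls w)) \<partial>gen (Suc s))"
    using assms by (simp add: ennreal_mult mult_ac)
  also have "\<dots> = (\<integral>\<^sup>+w. ennreal (real (Yobs t' w)) * ennreal (Mell r q 0 (ls w) * (\<Sum>b\<le>r. q b 0 * (if b = 0 then m00 else m10) * 1)) \<partial>gen s)"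
    by (rule emis_step[OF _ _ _ m00 m10]) (use mnn assms Yobs_ext in auto)
  also have "\<dots> = (\<integral>\<^sup>+w. ennreal (real (Yobs t' w)) * ennreal (hh (ls w)) \<partial>gen (t' + k))"
    by (simp add: hh_def th_def sk)
  also have "\<dots> = (\<integral>\<^sup>+w. ennreal (real (Yobs t' w)) * ennreal ((Mt ^^ k) hh (ls w)) \<partial>gen t')"
    by (rule iter_inv) (use assms Yobs_ext hhnn in auto)
  also have "\<dots> = (\<integral>\<^sup>+w. 1 * ennreal (real (Yobs (Suc s') w)) * ennreal ((Mt ^^ k) hh (ls w)) \<partial>gen (Suc s'))"
    using assms by simp
  also have "\<dots> = (\<integral>\<^sup>+w. 1 * ennreal (Mell r q 0 (ls w) * C) \<partial>gen s')"
    unfolding C_def by (rule emis_step[OF _ _ _ m00 m10]) (use mnn funpow_Mt_nonneg[OF hhnn] in auto)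
  also have "\<dots> = (\<integral>\<^sup>+w. ennreal ((\<lambda>z. Mell r q 0 z * C) (ls w)) \<partial>gen s')"
    by simp
  also have "\<dots> = ennreal (\<Sum>z\<le>r. (Mt ^^ s') (\<lambda>z. Mell r q 0 z * C) z * \<nu> z)"
    by (rule law) (use Cnn in \<open>auto intro!: mult_nonneg_nonneg Mell_nonneg\<close>)
  also have "\<dots> = ennreal (PP s' * C)"
    by (simp only: Mt_cmult) (simp add: PP_def sum_distrib_left mult_ac)
  finally show ?thesis by (simp add: C_def k_def hh_def)
qed

end


lemma copies:
  fixes P :: "'a pmf" and f g :: "'a \<Rightarrow> real" and m :: nat
  assumes fnn: "\<And>x. 0 \<le> f x" and gnn: "\<And>x. 0 \<le> g x"
    and If: "(\<integral>\<^sup>+x. ennreal (f x) \<partial>P) = ennreal a"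
    and Ig: "(\<integral>\<^sup>+x. ennreal (g x) \<partial>P) = ennreal b"
    and Ifg: "(\<integral>\<^sup>+x. ennreal (f x * g x) \<partial>P) = ennreal c"
    and abc: "0 \<le> a" "0 \<le> b" "0 \<le> c"
  shows "measure_pmf.expectation (Pi_pmf {..<m} d (\<lambda>_. P)) (\<lambda>\<omega>. \<Sum>k<m. f (\<omega> k)) = real m * a"
    and "pmf_cov (Pi_pmf {..<m} d (\<lambda>_. P)) (\<lambda>\<omega>. \<Sum>k<m. f (\<omega> k)) (\<lambda>\<omega>. \<Sum>k<m. g (\<omega> k))
         = real m * (c - a * b)"
proof -
  define Q where "Q = Pi_pmf {..<m} d (\<lambda>_. P)"
  define F where "F = (\<lambda>\<omega>. \<Sum>k<m. f (\<omega> k))"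
  define G where "G = (\<lambda>\<omega>. \<Sum>k<m. g (\<omega> k))"
  have comp: "(\<integral>\<^sup>+\<omega>. h (\<omega> k) \<partial>Q) = (\<integral>\<^sup>+x. h x \<partial>P)" if "k < m" for h :: "'a \<Rightarrow> ennreal" and k
  proof -
    have "(\<integral>\<^sup>+\<omega>. h (\<omega> k) \<partial>Q) = (\<integral>\<^sup>+x. h x \<partial>map_pmf (\<lambda>\<omega>. \<omega> k) Q)" by simp
    also have "map_pmf (\<lambda>\<omega>. \<omega> k) Q = P" unfolding Q_def using that by (simp add: Pi_pmf_component)
    finally show ?thesis .
  qed
  have sumF: "(\<integral>\<^sup>+\<omega>. ennreal (\<Sum>k<m. f (\<omega> k)) \<partial>Q) = ennreal (real m * a)"
    if nn: "\<And>x. 0 \<le> f x" and I: "(\<integral>\<^sup>+x. ennreal (f x) \<partial>P) = ennreal a" and a: "0 \<le> a"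
    for f :: "'a \<Rightarrow> real" and a :: real
  proof -
    have "(\<integral>\<^sup>+\<omega>. ennreal (\<Sum>k<m. f (\<omega> k)) \<partial>Q) = (\<integral>\<^sup>+\<omega>. (\<Sum>k<m. ennreal (f (\<omega> k))) \<partial>Q)"
      using nn by (simp add: sum_ennreal)
    also have "\<dots> = (\<Sum>k<m. \<integral>\<^sup>+\<omega>. ennreal (f (\<omega> k)) \<partial>Q)"
      by (rule nn_integral_sum) simp
    also have "\<dots> = (\<Sum>k<m. ennreal a)"
    proof (intro sum.cong refl)
      fix k assume "k \<in> {..<m}"
      then show "(\<integral>\<^sup>+\<omega>. ennreal (f (\<omega> k)) \<partial>Q) = ennreal a" using comp[of k "\<lambda>x. ennreal (f x)"] I by simp
    qed
    also have "\<dots> = ennreal (real m * a)" using a by (simp add: ennreal_mult ennreal_of_nat_eq_real_of_nat)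
    finally show ?thesis .
  qed
  have nF: "(\<integral>\<^sup>+\<omega>. ennreal (F \<omega>) \<partial>Q) = ennreal (real m * a)" unfolding F_def by (rule sumF[OF fnn If abc(1)])
  have nG: "(\<integral>\<^sup>+\<omega>. ennreal (G \<omega>) \<partial>Q) = ennreal (real m * b)" unfolding G_def by (rule sumF[OF gnn Ig abc(2)])
  have pair: "(\<integral>\<^sup>+\<omega>. ennreal (f (\<omega> k) * g (\<omega> l)) \<partial>Q) = ennreal (if k = l then c else a * b)"
    if kl: "k < m" "l < m" for k l
  proof (cases "k = l")
    case True
    then show ?thesis using comp[OF kl(1), of "\<lambda>x. ennreal (f x * g x)"] Ifg by simp
  next
    case False
    define hh where "hh i = (if i = k then (\<lambda>x. ennreal (f x)) else if i = l then (\<lambda>x. ennreal (g x)) else (\<lambda>_. 1))" for i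
    have pr: "(\<Prod>i\<in>{..<m}. H i) = H k * H l" if "\<And>i. i \<noteq> k \<Longrightarrow> i \<noteq> l \<Longrightarrow> H i = 1" for H :: "nat \<Rightarrow> ennreal"
    proof -
      have "(\<Prod>i\<in>{..<m}. H i) = H k * (\<Prod>i\<in>{..<m} - {k}. H i)" using kl by (subst prod.remove[of _ k]) auto
      also have "(\<Prod>i\<in>{..<m} - {k}. H i) = H l * (\<Prod>i\<in>{..<m} - {k} - {l}. H i)"
        using kl False by (subst prod.remove[of _ l]) auto
      also have "(\<Prod>i\<in>{..<m} - {k} - {l}. H i) = 1" using that by (intro prod.neutral) auto
      finally show ?thesis by simp
    qed
    have "(\<integral>\<^sup>+\<omega>. ennreal (f (\<omega> k) * g (\<omega> l)) \<partial>Q) = (\<integral>\<^sup>+\<omega>. (\<Prod>i\<in>{..<m}. hh i (\<omega> i)) \<partial>Q)"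
    proof (rule nn_integral_cong)
      fix \<omega> :: "nat \<Rightarrow> 'a"
      have "(\<Prod>i\<in>{..<m}. hh i (\<omega> i)) = hh k (\<omega> k) * hh l (\<omega> l)" by (rule pr) (simp add: hh_def)
      then show "ennreal (f (\<omega> k) * g (\<omega> l)) = (\<Prod>i\<in>{..<m}. hh i (\<omega> i))"
        using False fnn[of "\<omega> k"] gnn[of "\<omega> l"] by (simp add: hh_def ennreal_mult)
    qed
    also have "\<dots> = (\<Prod>i\<in>{..<m}. nn_integral P (hh i))"
      unfolding Q_def by (rule nn_integral_prod_Pi_pmf) simp
    also have "\<dots> = nn_integral P (hh k) * nn_integral P (hh l)"
      by (rule pr) (simp add: hh_def measure_pmf.emeasure_space_1)
    also have "\<dots> = ennreal (a * b)" using False If Ig abc by (simp add: hh_def ennreal_mult)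
    finally show ?thesis using False by simp
  qed
  have sum_if: "(\<Sum>l<m. if k = l then c else a * b) = c + (real m - 1) * (a * b)" if "k < m" for k
  proof -
    have "(\<Sum>l<m. if k = l then c else a * b) = (\<Sum>l<m. a * b + (if l = k then c - a * b else 0))"
      by (intro sum.cong refl) auto
    also have "\<dots> = real m * (a * b) + (c - a * b)" using that by (simp add: sum.distrib sum.delta')
    finally show ?thesis by (simp add: algebra_simps)
  qed
  have nFG: "(\<integral>\<^sup>+\<omega>. ennreal (F \<omega> * G \<omega>) \<partial>Q) = ennreal (real m * (c + (real m - 1) * (a * b)))"
  proof -
    have "(\<integral>\<^sup>+\<omega>. ennreal (F \<omega> * G \<omega>) \<partial>Q) = (\<integral>\<^sup>+\<omega>. (\<Sum>k<m. \<Sum>l<m. ennreal (f (\<omega> k) * g (\<omega> l))) \<partial>Q)"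
    proof (rule nn_integral_cong)
      fix \<omega> :: "nat \<Rightarrow> 'a"
      have "F \<omega> * G \<omega> = (\<Sum>k<m. \<Sum>l<m. f (\<omega> k) * g (\<omega> l))"
        unfolding F_def G_def by (simp add: sum_product)
      also have "ennreal \<dots> = (\<Sum>k<m. ennreal (\<Sum>l<m. f (\<omega> k) * g (\<omega> l)))"
        using fnn gnn by (intro sum_ennreal[symmetric] sum_nonneg mult_nonneg_nonneg) auto
      also have "\<dots> = (\<Sum>k<m. \<Sum>l<m. ennreal (f (\<omega> k) * g (\<omega> l)))"
        using fnn gnn by (intro sum.cong refl sum_ennreal[symmetric] mult_nonneg_nonneg) auto
      finally show "ennreal (F \<omega> * G \<omega>) = (\<Sum>k<m. \<Sum>l<m. ennreal (f (\<omega> k) * g (\<omega> l)))" .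
    qed
    also have "\<dots> = (\<Sum>k<m. \<Sum>l<m. \<integral>\<^sup>+\<omega>. ennreal (f (\<omega> k) * g (\<omega> l)) \<partial>Q)"
      by (simp add: nn_integral_sum)
    also have "\<dots> = (\<Sum>k<m. \<Sum>l<m. ennreal (if k = l then c else a * b))"
      by (intro sum.cong refl) (simp add: pair)
    also have "\<dots> = (\<Sum>k<m. ennreal (\<Sum>l<m. if k = l then c else a * b))"
      using abc by (intro sum.cong refl sum_ennreal) auto
    also have "\<dots> = (\<Sum>k<m. ennreal (c + (real m - 1) * (a * b)))"
      by (intro sum.cong refl) (simp add: sum_if)
    also have "\<dots> = of_nat m * ennreal (c + (real m - 1) * (a * b))"
      by (simp only: sum_constant card_lessThan)
    also have "\<dots> = ennreal (real m * (c + (real m - 1) * (a * b)))"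
    proof (cases "m = 0")
      case False
      then have X: "0 \<le> c + (real m - 1) * (a * b)" using abc by (auto intro!: add_nonneg_nonneg mult_nonneg_nonneg)
      show ?thesis by (subst ennreal_mult[OF _ X]) (auto simp: ennreal_of_nat_eq_real_of_nat)
    qed simp
    finally show ?thesis .
  qed
  have Fnn: "\<And>\<omega>. 0 \<le> F \<omega>" unfolding F_def using fnn by (simp add: sum_nonneg)
  have Gnn: "\<And>\<omega>. 0 \<le> G \<omega>" unfolding G_def using gnn by (simp add: sum_nonneg)
  have iF: "integrable Q F" by (rule integrableI_nn_integral_finite[OF _ _ nF]) (use Fnn in auto)
  have iG: "integrable Q G" by (rule integrableI_nn_integral_finite[OF _ _ nG]) (use Gnn in auto)
  have iFG: "integrable Q (\<lambda>\<omega>. F \<omega> * G \<omega>)"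
    by (rule integrableI_nn_integral_finite[OF _ _ nFG]) (use Fnn Gnn in auto)
  have eF: "measure_pmf.expectation Q F = real m * a"
    using integral_eq_nn_integral[of F Q] nF Fnn abc by simp
  have eG: "measure_pmf.expectation Q G = real m * b"
    using integral_eq_nn_integral[of G Q] nG Gnn abc by simp
  have Xnn: "0 \<le> real m * (c + (real m - 1) * (a * b))"
    by (cases "m = 0") (use abc in \<open>auto intro!: mult_nonneg_nonneg add_nonneg_nonneg\<close>)
  have eFG: "measure_pmf.expectation Q (\<lambda>\<omega>. F \<omega> * G \<omega>) = real m * (c + (real m - 1) * (a * b))"
    using integral_eq_nn_integral[of "\<lambda>\<omega>. F \<omega> * G \<omega>" Q] nFG Fnn Gnn abc Xnn
    by (simp add: mult_nonneg_nonneg)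
  show "measure_pmf.expectation (Pi_pmf {..<m} d (\<lambda>_. P)) (\<lambda>\<omega>. \<Sum>k<m. f (\<omega> k)) = real m * a"
    using eF by (simp add: Q_def F_def)
  have "pmf_cov Q F G = measure_pmf.expectation Q
      (\<lambda>\<omega>. F \<omega> * G \<omega> - (m * b) * F \<omega> - (m * a) * G \<omega> + (m * a) * (m * b))"
    unfolding pmf_cov_def eF eG by (rule arg_cong[where f="integral\<^sup>L Q"]) (auto simp: algebra_simps)
  also have "\<dots> = real m * (c + (real m - 1) * (a * b)) - (m * b) * (m * a) - (m * a) * (m * b) + (m * a) * (m * b)"
    using iF iG iFG eF eG eFG by simp
  also have "\<dots> = real m * (c - a * b)" by (simp add: algebra_simps)
  finally show "pmf_cov (Pi_pmf {..<m} d (\<lambda>_. P)) (\<lambda>\<omega>. \<Sum>k<m. f (\<omega> k)) (\<lambda>\<omega>. \<Sum>k<m. g (\<omega> k)) = real m * (c - a * b)"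
    by (simp add: Q_def F_def G_def)
qed



lemma sq_le_exp: "0 \<le> (x::real) \<Longrightarrow> x^2 \<le> 4 * exp x"
proof -
  assume x: "0 \<le> x"
  have e: "x / 2 \<le> exp (x / 2)" using exp_ge_add_one_self[of "x/2"] by linarith
  have "(x/2)^2 \<le> (exp (x/2))^2" using e x by (intro power_mono) auto
  also have "(exp (x/2))^2 = exp x" by (simp add: power2_eq_square exp_add[symmetric])
  finally show ?thesis by (simp add: power2_eq_square field_simps)
qed

lemma mgf_moments:
  fixes p :: "nat pmf"
  assumes "\<exists>\<epsilon>>0. \<forall>s. \<bar>s\<bar> < \<epsilon> \<longrightarrow> integrable (measure_pmf p) (\<lambda>n. exp (s * real n))"
  shows "integrable p (\<lambda>n. (real n)^2)" "integrable p (\<lambda>n. real n)"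
proof -
  obtain \<epsilon> where e: "\<epsilon> > 0" "\<forall>s. \<bar>s\<bar> < \<epsilon> \<longrightarrow> integrable (measure_pmf p) (\<lambda>n. exp (s * real n))"
    using assms by blast
  define s where "s = \<epsilon> / 2"
  have s: "s > 0" "\<bar>s\<bar> < \<epsilon>" using e by (auto simp: s_def)
  have ie: "integrable p (\<lambda>n. 4 / s^2 * exp (s * real n))" using e s by auto
  show i2: "integrable p (\<lambda>n. (real n)^2)"
  proof (rule Bochner_Integration.integrable_bound[OF ie])
    show "AE x in measure_pmf p. norm ((real x)^2) \<le> norm (4 / s^2 * exp (s * real x))"
    proof (rule AE_pmfI)
      fix n :: nat
      have "(s * real n)^2 \<le> 4 * exp (s * real n)" using s by (intro sq_le_exp) auto
      then have "s^2 * (real n)^2 \<le> 4 * exp (s * real n)" by (simp add: power_mult_distrib)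
      then have "(real n)^2 \<le> 4 / s^2 * exp (s * real n)" using s by (simp add: field_simps)
      then show "norm ((real n)^2) \<le> norm (4 / s^2 * exp (s * real n))" by simp
    qed
  qed simp
  show "integrable p (\<lambda>n. real n)"
  proof (rule Bochner_Integration.integrable_bound[OF i2])
    show "AE x in measure_pmf p. norm (real x) \<le> norm ((real x)^2)"
    proof (rule AE_pmfI)
      fix n :: nat
      have "real n \<le> (real n)^2" by (cases n) (auto simp: power2_eq_square)
      then show "norm (real n) \<le> norm ((real n)^2)" by simp
    qed
  qed simp
qed

lemma mom_nn:
  fixes p :: "nat pmf"
  assumes "\<exists>\<epsilon>>0. \<forall>s. \<bar>s\<bar> < \<epsilon> \<longrightarrow> integrable (measure_pmf p) (\<lambda>n. exp (s * real n))"
  shows "(\<integral>\<^sup>+y. ennreal (real y) \<partial>p) = ennreal (mean_pmf p)" "0 \<le> mean_pmf p"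
    "(\<integral>\<^sup>+y. ennreal ((real y)^2) \<partial>p) = ennreal (mom2_pmf p)" "0 \<le> mom2_pmf p"
  using mgf_moments[OF assms]
  by (auto simp: mean_pmf_def mom2_pmf_def nn_integral_eq_integral)


lemma sum_split0:
  fixes f :: "nat \<Rightarrow> real"
  shows "(\<Sum>b\<le>r. f b * (if b = 0 then A else B)) = f 0 * A + B * ((\<Sum>b\<le>r. f b) - f 0)"
proof -
  have "(\<Sum>b\<le>r. f b * (if b = 0 then A else B)) = (\<Sum>b\<le>r. f b * B + (if b = 0 then f 0 * (A - B) else 0))"
    by (intro sum.cong refl) (auto simp: algebra_simps)
  also have "\<dots> = (\<Sum>b\<le>r. f b) * B + f 0 * (A - B)"
    by (simp add: sum.distrib sum_distrib_right)
  finally show ?thesis by (simp add: algebra_simps)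
qed

context hm2
begin

lemma sum_q0: "(\<Sum>b\<le>r. q b 0 * (if b = 0 then A else B)) = q 0 0 * A + (1 - q 0 0) * B"
  using sum_split0[where f="\<lambda>b. q b 0" and r=r and A=A and B=B] q_stoch[of 0] by (simp add: algebra_simps)

lemma Mt_Mell0: "z \<le> r \<Longrightarrow> q 0 0 \<noteq> 0 \<Longrightarrow> (Mt ^^ s) (Mell r q 0) z = Mp (Suc s) 0 z / q 0 0"
proof -
  assume z: "z \<le> r" and q: "q 0 0 \<noteq> 0"
  have "(Mt ^^ s) (Mell r q 0) z = (\<Sum>x\<le>r. Mell r q 0 x * Mp s x z)" using z by (rule Mt_Mp)
  also have "\<dots> = (\<Sum>x\<le>r. Mfull r q 0 x * Mp s x z) / q 0 0"
    using q by (simp add: Mfull_row0 sum_divide_distrib)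
  also have "\<dots> = Mp (Suc s) 0 z / q 0 0" by (subst Mp_left) (use z in auto)
  finally show ?thesis .
qed

lemma PP_Mp: "q 0 0 \<noteq> 0 \<Longrightarrow> PP s = (\<Sum>z\<le>r. Mp (Suc s) 0 z * \<nu> z) / q 0 0"
  unfolding PP_def by (simp add: Mt_Mell0 sum_divide_distrib del: Mp.simps)

lemma Cc_Mp: assumes "q 0 0 \<noteq> 0"
  shows "(\<Sum>b\<le>r. q b 0 * (if b = 0 then m00 else m10) * (Mt ^^ k) (\<lambda>z. Mell r q 0 z * th) b)
   = th / q 0 0 * (q 0 0 * m00 * Mp (Suc k) 0 0 + m10 * (Mp (Suc (Suc k)) 0 0 - q 0 0 * Mp (Suc k) 0 0))"
proof -
  have "(\<Sum>b\<le>r. q b 0 * (if b = 0 then m00 else m10) * (Mt ^^ k) (\<lambda>z. Mell r q 0 z * th) b)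
     = (\<Sum>b\<le>r. (th / q 0 0 * (q b 0 * Mp (Suc k) 0 b)) * (if b = 0 then m00 else m10))"
    using assms by (intro sum.cong refl) (simp add: Mt_cmult Mt_Mell0 del: Mp.simps)
  also have "\<dots> = th / q 0 0 * (q 0 0 * Mp (Suc k) 0 0) * m00 + m10 * ((\<Sum>b\<le>r. th / q 0 0 * (q b 0 * Mp (Suc k) 0 b)) - th / q 0 0 * (q 0 0 * Mp (Suc k) 0 0))"
    by (rule sum_split0)
  also have "(\<Sum>b\<le>r. th / q 0 0 * (q b 0 * Mp (Suc k) 0 b)) = th / q 0 0 * Mp (Suc (Suc k)) 0 0"
  proof -
    have "Mp (Suc (Suc k)) 0 0 = (\<Sum>b\<le>r. Mp (Suc k) 0 b * Mfull r q b 0)" by (simp only: Mp.simps(2))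
    also have "\<dots> = (\<Sum>b\<le>r. q b 0 * Mp (Suc k) 0 b)" by (intro sum.cong refl) (simp add: Mfull_col0)
    finally show ?thesis by (simp add: sum_distrib_left)
  qed
  finally show ?thesis by (simp add: algebra_simps)
qed

lemma eig_lemmas:
  fixes V Vi :: "nat \<Rightarrow> nat \<Rightarrow> complex" and lam :: "nat \<Rightarrow> complex"
  assumes V_inv1: "\<And>x z. x \<le> r \<Longrightarrow> z \<le> r \<Longrightarrow> (\<Sum>y\<le>r. V x y * Vi y z) = (if x = z then 1 else 0)"
    and V_inv2: "\<And>x z. x \<le> r \<Longrightarrow> z \<le> r \<Longrightarrow> (\<Sum>y\<le>r. Vi x y * V y z) = (if x = z then 1 else 0)"
    and M_diag: "\<And>x z. x \<le> r \<Longrightarrow> z \<le> r \<Longrightarrow> complex_of_real (Mfull r q x z) = (\<Sum>y\<le>r. V x y * lam y * Vi y z)"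
    and q: "q 0 0 \<noteq> 0"
  shows "complex_of_real (PP s) = (\<Sum>x\<le>r. V 0 x * lam x / complex_of_real (q 0 0)
                          * (\<Sum>z\<le>r. Vi x z * complex_of_real (\<nu> z)) * lam x ^ s)"
    and "complex_of_real (Mp (Suc d) 0 0 / q 0 0) = (\<Sum>x\<le>r. lam x / complex_of_real (q 0 0) * V 0 x * Vi x 0 * lam x ^ d)"
proof -
  note E = Mp_eig[OF V_inv1 V_inv2 M_diag]
  have "complex_of_real (PP s) = (\<Sum>z\<le>r. complex_of_real (Mp (Suc s) 0 z) * complex_of_real (\<nu> z)) / complex_of_real (q 0 0)"
    using q by (simp add: PP_Mp del: Mp.simps)
  also have "\<dots> = (\<Sum>z\<le>r. (\<Sum>y\<le>r. V 0 y * lam y ^ Suc s * Vi y z) * complex_of_real (\<nu> z)) / complex_of_real (q 0 0)"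
    by (simp add: E del: Mp.simps)
  also have "(\<Sum>z\<le>r. (\<Sum>y\<le>r. V 0 y * lam y ^ Suc s * Vi y z) * complex_of_real (\<nu> z))
      = (\<Sum>z\<le>r. \<Sum>y\<le>r. V 0 y * lam y ^ Suc s * (Vi y z * complex_of_real (\<nu> z)))"
    by (intro sum.cong refl) (simp add: sum_distrib_right sum_distrib_left mult_ac)
  also have "\<dots> = (\<Sum>y\<le>r. \<Sum>z\<le>r. V 0 y * lam y ^ Suc s * (Vi y z * complex_of_real (\<nu> z)))"
    by (rule sum.swap)
  also have "\<dots> = (\<Sum>y\<le>r. V 0 y * lam y ^ Suc s * (\<Sum>z\<le>r. Vi y z * complex_of_real (\<nu> z)))"
    by (simp add: sum_distrib_left)
  finally show "complex_of_real (PP s) = (\<Sum>x\<le>r. V 0 x * lam x / complex_of_real (q 0 0)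
                          * (\<Sum>z\<le>r. Vi x z * complex_of_real (\<nu> z)) * lam x ^ s)"
    by (simp add: sum_divide_distrib mult_ac)
  have "complex_of_real (Mp (Suc d) 0 0 / q 0 0) = (\<Sum>y\<le>r. V 0 y * lam y ^ Suc d * Vi y 0) / complex_of_real (q 0 0)"
    by (simp add: E del: Mp.simps)
  then show "complex_of_real (Mp (Suc d) 0 0 / q 0 0) = (\<Sum>x\<le>r. lam x / complex_of_real (q 0 0) * V 0 x * Vi x 0 * lam x ^ d)"
    by (simp add: sum_divide_distrib mult_ac)
qed

end

context hm2
begin
lemma PP_nn: "0 \<le> PP s"
  unfolding PP_def by (auto intro!: sum_nonneg mult_nonneg_nonneg funpow_Mt_nonneg Mell_nonneg \<nu>_nonneg)
lemma sq_nn: "0 \<le> sq"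
  unfolding sq_def by (auto intro!: sum_nonneg mult_nonneg_nonneg q_range[THEN conjunct1] mnn)
lemma Cc_nn: "0 \<le> (\<Sum>b\<le>r. q b 0 * (if b = 0 then m00 else m10) * (Mt ^^ k) (\<lambda>z. Mell r q 0 z * th) b)"
  using th_nn by (auto intro!: sum_nonneg mult_nonneg_nonneg q_range[THEN conjunct1] mnn funpow_Mt_nonneg Mell_nonneg)
end

lemma sum_split0c:
  fixes f :: "nat \<Rightarrow> 'a::comm_monoid_add"
  shows "(\<Sum>z\<le>r. f z) = f 0 + (\<Sum>z\<le>r. if z = 0 then 0 else f z)"
proof -
  have "(\<Sum>z\<le>r. f z) = (\<Sum>z\<le>r. (if z = 0 then f 0 else 0) + (if z = 0 then 0 else f z))"
    by (intro sum.cong refl) auto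
  also have "\<dots> = f 0 + (\<Sum>z\<le>r. if z = 0 then 0 else f z)"
    by (simp add: sum.distrib)
  finally show ?thesis .
qed

theorem mainTheorem6:
  fixes r T m :: nat
    and q :: "nat \<Rightarrow> nat \<Rightarrow> real"
    and \<nu> :: "nat \<Rightarrow> real"
    and p00 p10 :: "nat pmf"
    and V Vi :: "nat \<Rightarrow> nat \<Rightarrow> complex"
    and lam :: "nat \<Rightarrow> complex"
    and \<alpha> \<alpha>0 \<alpha>1 :: "nat \<Rightarrow> complex"
    and \<mu> \<mu>0 :: "nat \<Rightarrow> complex"
  assumes r_pos: "r \<ge> 1" and T_pos: "T \<ge> 1" and m_pos: "m \<ge> 1"
    and q_range: "\<And>x z. x \<le> r \<Longrightarrow> z \<le> r - 1 \<Longrightarrow> 0 \<le> q x z \<and> q x z \<le> 1"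
    and q_stoch: "\<And>z. z \<le> r - 1 \<Longrightarrow> (\<Sum>x\<le>r. q x z) = 1"
    and \<nu>_nonneg: "\<And>x. x \<le> r \<Longrightarrow> 0 \<le> \<nu> x"
    and \<nu>_sum: "(\<Sum>x\<le>r. \<nu> x) = 1"
    and q00: "0 < q 0 0" "q 0 0 < 1"
    and th1_pos: "theta1 q p00 p10 > 0"
    and mgf00: "\<exists>\<epsilon>>0. \<forall>s. \<bar>s\<bar> < \<epsilon> \<longrightarrow> integrable (measure_pmf p00) (\<lambda>n. exp (s * real n))"
    and mgf10: "\<exists>\<epsilon>>0. \<forall>s. \<bar>s\<bar> < \<epsilon> \<longrightarrow> integrable (measure_pmf p10) (\<lambda>n. exp (s * real n))"
    and V_inv1: "\<And>x z. x \<le> r \<Longrightarrow> z \<le> r \<Longrightarrow>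
                   (\<Sum>y\<le>r. V x y * Vi y z) = (if x = z then 1 else 0)"
    and V_inv2: "\<And>x z. x \<le> r \<Longrightarrow> z \<le> r \<Longrightarrow>
                   (\<Sum>y\<le>r. Vi x y * V y z) = (if x = z then 1 else 0)"
    and M_diag: "\<And>x z. x \<le> r \<Longrightarrow> z \<le> r \<Longrightarrow>
                   complex_of_real (Mfull r q x z) = (\<Sum>y\<le>r. V x y * lam y * Vi y z)"
    and lam_r: "lam r = 1"
    and V_col_r: "\<And>x. x \<le> r \<Longrightarrow> V x r = (if x = r then 1 else 0)"
    and \<alpha>_def: "\<And>x. \<alpha> x = V 0 x * lam x / complex_of_real (q 0 0)
                          * (\<Sum>z\<le>r. Vi x z * complex_of_real (\<nu> z))"
    and \<alpha>0_def: "\<And>x. \<alpha>0 x = lam x / complex_of_real (q 0 0) * V 0 x * Vi x 0"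
    and \<alpha>1_def: "\<And>x. \<alpha>1 x = lam x / complex_of_real (q 0 0) * V 0 x
                   * (\<Sum>z\<le>r. Vi x z * complex_of_real ((if z = 0 then 0 else \<nu> z) / (1 - \<nu> 0)))"
    and \<mu>_def: "\<And>t. \<mu> t = of_nat m * complex_of_real (theta1 q p00 p10)
                          * (\<Sum>x\<le>r. \<alpha> x * lam x ^ (t - 1))"
    and \<mu>0_def: "\<And>t. \<mu>0 t = of_nat m * complex_of_real (theta1 q p00 p10)
                          * (\<Sum>x\<le>r. \<alpha>0 x * lam x ^ (t - 1))"
  shows
    "(\<forall>t\<in>{1..T}. complex_of_real (measure_pmf.expectation
          (htmm_copies m (htmm r T q \<nu> p00 p10)) (Ysum m t)) = \<mu> t)
   \<and> (\<nu> 0 < 1 \<longrightarrow> (\<forall>t\<in>{1..T}. \<mu> t = of_nat m * complex_of_real (theta1 q p00 p10)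
          * (\<Sum>x\<le>r - 1. (complex_of_real (\<nu> 0) * \<alpha>0 x + complex_of_real (1 - \<nu> 0) * \<alpha>1 x)
                           * lam x ^ (t - 1))))
   \<and> (\<forall>t\<in>{1..T}. complex_of_real (pmf_cov (htmm_copies m (htmm r T q \<nu> p00 p10))
          (Ysum m t) (Ysum m t))
        = (of_nat m * complex_of_real (theta1 q p00 p10) * complex_of_real (theta3 q p00 p10 + 1)
           + of_nat m - \<mu> t) * \<mu> t / of_nat m)
   \<and> (\<forall>t\<in>{1..T}. \<forall>t'\<in>{1..T}. t' < t \<longrightarrow>
        complex_of_real (pmf_cov (htmm_copies m (htmm r T q \<nu> p00 p10))
          (Ysum m t) (Ysum m t'))
        = (complex_of_real (theta2 q p00 p10 - q 0 0 * (1 - theta2 q p00 p10) / (1 - q 0 0))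
             * \<mu>0 (t - t')
           + complex_of_real ((1 - theta2 q p00 p10) / (1 - q 0 0)) * \<mu>0 (t - t' + 1)
           - \<mu> t) * \<mu> t' / of_nat m)"
proof -
  interpret hm2 r q \<nu> p00 p10 "mean_pmf p00" "mean_pmf p10" "mom2_pmf p00" "mom2_pmf p10"
    by (unfold_locales; (use r_pos q_range q_stoch \<nu>_nonneg \<nu>_sum mom_nn[OF mgf00] mom_nn[OF mgf10] in auto))
  define th1 where "th1 = theta1 q p00 p10"
  define q0 where "q0 = q 0 0"
  define A where "A = mean_pmf p00"
  define B where "B = mean_pmf p10"
  have q0: "0 < q0" "q0 < 1" using q00 by (auto simp: q0_def)
  have th1: "0 < th1" using th1_pos by (simp add: th1_def)
  have th_eq: "th = th1" by (simp add: th_def sum_q0 theta1_def th1_def)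
  have sq_eq: "sq = q 0 0 * mom2_pmf p00 + (1 - q 0 0) * mom2_pmf p10" by (simp add: sq_def sum_q0)
  have th1AB: "th1 = q0 * A + (1 - q0) * B" by (simp add: th1_def theta1_def q0_def A_def B_def)
  have P: "htmm r T q \<nu> p00 p10 = gen T" by (rule htmm_gen)
  have Ysum_eq: "Ysum m t = (\<lambda>\<omega>. \<Sum>k<m. real (Yobs t (\<omega> k)))" for t by (auto simp: Ysum_def)
  have Qeq: "htmm_copies m (htmm r T q \<nu> p00 p10) = Pi_pmf {..<m} undefined (\<lambda>_. gen T)"
    by (simp add: htmm_copies_def P)
  have q0ne: "q 0 0 \<noteq> 0" using q00 by simp
  note eig = eig_lemmas[OF V_inv1 V_inv2 M_diag q0ne]
  have mu_eq: "\<mu> t = complex_of_real (real m * th1 * PP (t - 1))" for t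
    by (simp add: \<mu>_def \<alpha>_def eig(1) th1_def)
  have mu0_eq: "\<mu>0 (Suc d) = complex_of_real (real m * th1 * (Mp (Suc d) 0 0 / q0))" for d
  proof -
    have "(\<Sum>x\<le>r. \<alpha>0 x * lam x ^ (Suc d - 1)) = (\<Sum>x\<le>r. lam x / complex_of_real (q 0 0) * V 0 x * Vi x 0 * lam x ^ d)"
      by (simp add: \<alpha>0_def)
    also have "\<dots> = complex_of_real (Mp (Suc d) 0 0 / q 0 0)" by (rule eig(2)[symmetric])
    finally show ?thesis unfolding \<mu>0_def th1_def q0_def by (simp del: Mp.simps)
  qed
  have EY: "(\<integral>\<^sup>+w. ennreal (real (Yobs t w)) \<partial>gen T) = ennreal (PP (t - 1) * th1)"
    if "t \<in> {1..T}" for t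
    using E1[of t "t - 1" T] that th_eq by auto
  have EY2: "(\<integral>\<^sup>+w. ennreal (real (Yobs t w) * real (Yobs t w)) \<partial>gen T) = ennreal (PP (t - 1) * sq)"
    if "t \<in> {1..T}" for t
    using E2[of t "t - 1" T] that by (auto simp: power2_eq_square)
  have cop: "measure_pmf.expectation (htmm_copies m (htmm r T q \<nu> p00 p10)) (Ysum m t) = real m * (PP (t - 1) * th1)"
    "pmf_cov (htmm_copies m (htmm r T q \<nu> p00 p10)) (Ysum m t) (Ysum m t) = real m * (PP (t - 1) * sq - PP (t - 1) * th1 * (PP (t - 1) * th1))"
    if t: "t \<in> {1..T}" for t
    unfolding Qeq Ysum_eq
    by (rule copies[OF _ _ EY[OF t] EY[OF t] EY2[OF t]]; use PP_nn th1 sq_nn in \<open>auto intro: mult_nonneg_nonneg\<close>)+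
  have part1: "\<forall>t\<in>{1..T}. complex_of_real (measure_pmf.expectation
          (htmm_copies m (htmm r T q \<nu> p00 p10)) (Ysum m t)) = \<mu> t"
    using cop(1) by (simp add: mu_eq mult_ac)
  have part2: "\<nu> 0 < 1 \<longrightarrow> (\<forall>t\<in>{1..T}. \<mu> t = of_nat m * complex_of_real (theta1 q p00 p10)
          * (\<Sum>x\<le>r - 1. (complex_of_real (\<nu> 0) * \<alpha>0 x + complex_of_real (1 - \<nu> 0) * \<alpha>1 x)
                           * lam x ^ (t - 1)))"
  proof (intro impI ballI)
    fix t assume nu0: "\<nu> 0 < 1"
    have comb: "complex_of_real (\<nu> 0) * \<alpha>0 x + complex_of_real (1 - \<nu> 0) * \<alpha>1 x = \<alpha> x" for x
    proof -
      have ne: "complex_of_real (1 - \<nu> 0) \<noteq> 0" using nu0 by simp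
      define S1 where "S1 = (\<Sum>z\<le>r. Vi x z * complex_of_real ((if z = 0 then 0 else \<nu> z) / (1 - \<nu> 0)))"
      define S0 where "S0 = (\<Sum>z\<le>r. if z = 0 then 0 else Vi x z * complex_of_real (\<nu> z))"
      define S where "S = (\<Sum>z\<le>r. Vi x z * complex_of_real (\<nu> z))"
      define c where "c = lam x / complex_of_real (q 0 0)"
      have e1: "complex_of_real (1 - \<nu> 0) * S1 = S0"
        unfolding S1_def S0_def sum_distrib_left using ne by (intro sum.cong refl) (auto simp: field_simps)
      have e2: "S = Vi x 0 * complex_of_real (\<nu> 0) + S0"
        unfolding S_def S0_def by (rule sum_split0c)
      have ab: "\<alpha>0 x = c * V 0 x * Vi x 0" "\<alpha>1 x = c * V 0 x * S1" "\<alpha> x = c * V 0 x * S"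
        by (simp_all add: \<alpha>0_def \<alpha>1_def \<alpha>_def c_def S1_def S_def mult_ac)
      have gen: "a * (c * v * w) + b * (c * v * s1) = c * v * (w * a + b * s1)" for a b c v w s1 :: complex
        by (simp add: algebra_simps)
      show ?thesis unfolding ab gen e1 e2 by (simp add: mult_ac)
    qed
    have ar: "\<alpha> r = 0" using V_col_r[of 0] r_pos by (simp add: \<alpha>_def)
    have rr: "r = Suc (r - 1)" using r_pos by simp
    have "(\<Sum>x\<le>r. \<alpha> x * lam x ^ (t - 1)) = (\<Sum>x\<le>r - 1. \<alpha> x * lam x ^ (t - 1))"
    proof -
      have ar': "\<alpha> (Suc (r - Suc 0)) = 0" using ar r_pos by (simp add: Suc_pred)
      show ?thesis by (subst rr, subst sum.atMost_Suc) (simp add: ar')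
    qed
    then show "\<mu> t = of_nat m * complex_of_real (theta1 q p00 p10)
          * (\<Sum>x\<le>r - 1. (complex_of_real (\<nu> 0) * \<alpha>0 x + complex_of_real (1 - \<nu> 0) * \<alpha>1 x)
                           * lam x ^ (t - 1))"
      unfolding comb by (simp add: \<mu>_def)
  qed
  have part3: "\<forall>t\<in>{1..T}. complex_of_real (pmf_cov (htmm_copies m (htmm r T q \<nu> p00 p10))
          (Ysum m t) (Ysum m t))
        = (of_nat m * complex_of_real (theta1 q p00 p10) * complex_of_real (theta3 q p00 p10 + 1)
           + of_nat m - \<mu> t) * \<mu> t / of_nat m"
  proof
    fix t assume t: "t \<in> {1..T}"
    define Pt where "Pt = PP (t - 1)"
    have m0: "real m \<noteq> 0" using m_pos by simp
    have th3: "theta3 q p00 p10 + 1 = sq / th1^2 - 1 / th1"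
      using th1 by (simp add: theta3_def Let_def sq_eq th1_def[symmetric] field_simps power2_eq_square)
    have real_eq: "real m * (Pt * sq - Pt * th1 * (Pt * th1))
        = (real m * th1 * (theta3 q p00 p10 + 1) + real m - real m * th1 * Pt) * (real m * th1 * Pt) / real m"
      unfolding th3 using th1 m0 by (simp add: field_simps power2_eq_square)
    have "complex_of_real (pmf_cov (htmm_copies m (htmm r T q \<nu> p00 p10)) (Ysum m t) (Ysum m t))
        = complex_of_real ((real m * th1 * (theta3 q p00 p10 + 1) + real m - real m * th1 * Pt) * (real m * th1 * Pt) / real m)"
      using cop(2)[OF t] real_eq by (simp add: Pt_def)
    also have "\<dots> = (of_nat m * complex_of_real (theta1 q p00 p10) * complex_of_real (theta3 q p00 p10 + 1)
           + of_nat m - \<mu> t) * \<mu> t / of_nat m"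
      by (simp add: mu_eq Pt_def th1_def)
    finally show "complex_of_real (pmf_cov (htmm_copies m (htmm r T q \<nu> p00 p10)) (Ysum m t) (Ysum m t))
        = (of_nat m * complex_of_real (theta1 q p00 p10) * complex_of_real (theta3 q p00 p10 + 1)
           + of_nat m - \<mu> t) * \<mu> t / of_nat m" .
  qed
  have part4: "\<forall>t\<in>{1..T}. \<forall>t'\<in>{1..T}. t' < t \<longrightarrow>
        complex_of_real (pmf_cov (htmm_copies m (htmm r T q \<nu> p00 p10))
          (Ysum m t) (Ysum m t'))
        = (complex_of_real (theta2 q p00 p10 - q 0 0 * (1 - theta2 q p00 p10) / (1 - q 0 0))
             * \<mu>0 (t - t')
           + complex_of_real ((1 - theta2 q p00 p10) / (1 - q 0 0)) * \<mu>0 (t - t' + 1)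
           - \<mu> t) * \<mu> t' / of_nat m"
  proof (intro ballI impI)
    fix t t' assume t: "t \<in> {1..T}" and t': "t' \<in> {1..T}" and tt: "t' < t"
    define s where "s = t - 1"
    define s' where "s' = t' - 1"
    define k where "k = s - t'"
    define d where "d = t - t'"
    have ts: "t = Suc s" "t' = Suc s'" using t t' by (auto simp: s_def s'_def)
    have dk: "d = Suc k" using tt by (auto simp: d_def k_def s_def)
    define Cc where "Cc = (\<Sum>b\<le>r. q b 0 * (if b = 0 then mean_pmf p00 else mean_pmf p10) * (Mt ^^ k) (\<lambda>z. Mell r q 0 z * th) b)"
    have E12': "(\<integral>\<^sup>+w. ennreal (real (Yobs t w) * real (Yobs t' w)) \<partial>gen T) = ennreal (PP s' * Cc)"
      unfolding Cc_def k_def by (rule E12) (use ts tt t in auto)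
    have cv: "pmf_cov (htmm_copies m (htmm r T q \<nu> p00 p10)) (Ysum m t) (Ysum m t')
        = real m * (PP s' * Cc - PP s * th1 * (PP s' * th1))"
      unfolding Qeq Ysum_eq
      by (rule copies(2)[OF _ _ EY[OF t, folded s_def] EY[OF t', folded s'_def] E12']; use PP_nn th1 Cc_nn in \<open>auto intro: mult_nonneg_nonneg simp: Cc_def s_def s'_def\<close>)
    define D1 where "D1 = Mp d 0 0"
    define D2 where "D2 = Mp (Suc d) 0 0"
    have Cc_eq: "Cc = th1 / q0 * (q0 * A * D1 + B * (D2 - q0 * D1))"
      unfolding Cc_def using Cc_Mp[OF q0ne, of k] by (simp add: th_eq D1_def D2_def dk q0_def A_def B_def del: Mp.simps)
    define th2 where "th2 = theta2 q p00 p10"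
    have th2: "th2 = q0 * A / th1" by (simp add: th2_def theta2_def q0_def A_def th1_def)
    have o1: "1 - th2 = (th1 - q0 * A) / th1" using th1 by (simp add: th2 field_simps)
    have o2: "th1 - q0 * A = (1 - q0) * B" using th1AB by simp
    have h1: "(1 - th2) / (1 - q0) = B / th1" unfolding o1 o2 using q0 th1 by (simp add: field_simps)
    have h2: "th2 - q0 * (1 - th2) / (1 - q0) = q0 * (A - B) / th1"
    proof -
      have e: "q0 * (1 - th2) / (1 - q0) = q0 * B / th1" using h1 by (metis times_divide_eq_right)
      show ?thesis by (subst e) (simp add: th2 diff_divide_distrib right_diff_distrib)
    qed
    have m0: "real m \<noteq> 0" using m_pos by simp
    have real_eq: "real m * (PP s' * Cc - PP s * th1 * (PP s' * th1)) =
       ((q0 * (A - B) / th1) * (real m * th1 * (D1 / q0)) + (B / th1) * (real m * th1 * (D2 / q0))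
        - real m * th1 * PP s) * (real m * th1 * PP s') / real m"
      unfolding Cc_eq using th1 q0 m0 by (simp add: field_simps)
    have mu0d: "\<mu>0 (t - t') = complex_of_real (real m * th1 * (D1 / q0))"
      unfolding D1_def d_def[symmetric] dk by (rule mu0_eq)
    have mu0d1: "\<mu>0 (t - t' + 1) = complex_of_real (real m * th1 * (D2 / q0))"
      unfolding D2_def d_def[symmetric] dk by (simp add: mu0_eq[of "Suc k"] del: Mp.simps)
    have "complex_of_real (pmf_cov (htmm_copies m (htmm r T q \<nu> p00 p10)) (Ysum m t) (Ysum m t'))
      = complex_of_real (((q0 * (A - B) / th1) * (real m * th1 * (D1 / q0)) + (B / th1) * (real m * th1 * (D2 / q0))
        - real m * th1 * PP s) * (real m * th1 * PP s') / real m)"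
      using cv real_eq by simp
    also have "\<dots> = (complex_of_real (th2 - q0 * (1 - th2) / (1 - q0))
             * \<mu>0 (t - t')
           + complex_of_real ((1 - th2) / (1 - q0)) * \<mu>0 (t - t' + 1)
           - \<mu> t) * \<mu> t' / of_nat m"
      unfolding mu0d mu0d1 mu_eq h1 h2
      by (simp add: s_def s'_def)
    finally show "complex_of_real (pmf_cov (htmm_copies m (htmm r T q \<nu> p00 p10)) (Ysum m t) (Ysum m t'))
      = (complex_of_real (theta2 q p00 p10 - q 0 0 * (1 - theta2 q p00 p10) / (1 - q 0 0))
             * \<mu>0 (t - t')
           + complex_of_real ((1 - theta2 q p00 p10) / (1 - q 0 0)) * \<mu>0 (t - t' + 1)
           - \<mu> t) * \<mu> t' / of_nat m"
      by (simp only: th2_def q0_def)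
  qed
  show ?thesis using part1 part2 part3 part4 by blast
qed


end
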